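(* Let $G$ be a (finite or infinite) group with identity $\mathbf{1}$. If $G$ is not a hamiltonian $2$-group, then the complete graph $\mathrm{Cay}(G; G\setminus\{\mathbf{1}\})$ is strongly CCA.
   Context: A hamiltonian $2$-group is a group isomorphic to $Q_8\times B$, where $Q_8$ is the quaternion group of order $8$ and $B$ is an abelian group with $b^2=\mathbf{1}$ for all $b\in B$. For an inverse-closed subset $S$ of $G$, $\mathrm{Cay}(G;S)$ has vertex set $G$ and an edge from $g$ to $gs$ for each $g\in G$, $s\in S$; the edge $g$—$gs$ is coloured $\{s,s^{-1}\}$. A graph automorphism is colour-permuting if whenever two edges have the same colour their images also have the same colour. A map $\varphi\colon G\to G$ is affine if $\varphi(x)=\alpha(gx)$ for some $\alpha\in\mathrm{Aut}(G)$, $g\in G$. The Cayley graph is strongly CCA if every colour-permuting automorphism of it is affine. *)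

theory Defs
  imports "HOL-Algebra.Algebra"
begin

datatype qunit = QOne | QI | QJ | QK

fun qunit_mult :: "qunit \<Rightarrow> qunit \<Rightarrow> bool \<times> qunit" where
  "qunit_mult QOne x = (False, x)"
| "qunit_mult x QOne = (False, x)"
| "qunit_mult QI QI = (True, QOne)"
| "qunit_mult QJ QJ = (True, QOne)"
| "qunit_mult QK QK = (True, QOne)"
| "qunit_mult QI QJ = (False, QK)"
| "qunit_mult QJ QK = (False, QI)"
| "qunit_mult QK QI = (False, QJ)"
| "qunit_mult QJ QI = (True, QK)"
| "qunit_mult QK QJ = (True, QI)"
| "qunit_mult QI QK = (True, QJ)"

text \<open>Elements of Q8 are pairs (s, u) standing for (-1)^s u.\<close>
fun q8_mult :: "bool \<times> qunit \<Rightarrow> bool \<times> qunit \<Rightarrow> bool \<times> qunit" where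
  "q8_mult (s, a) (t, b) = (s \<noteq> (t \<noteq> fst (qunit_mult a b)), snd (qunit_mult a b))"

definition Q8 :: "(bool \<times> qunit) monoid" where
  "Q8 = \<lparr> carrier = UNIV, monoid.mult = q8_mult, one = (False, QOne) \<rparr>"

text \<open>G is isomorphic to Q8 x B with B abelian and b^2 = 1 for all b in B.
  Since such a B embeds into G, it may be taken with elements of the same type as G.\<close>
definition hamiltonian_2group :: "('a, 'c) monoid_scheme \<Rightarrow> bool" where
  "hamiltonian_2group G \<longleftrightarrow>
     (\<exists>B :: 'a monoid. comm_group B \<and> (\<forall>b\<in>carrier B. b \<otimes>\<^bsub>B\<^esub> b = \<one>\<^bsub>B\<^esub>)
        \<and> G \<cong> Q8 \<times>\<times> B)"

definition cay_adj :: "('a, 'c) monoid_scheme \<Rightarrow> 'a set \<Rightarrow> 'a \<Rightarrow> 'a \<Rightarrow> bool" where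
  "cay_adj G S g h \<longleftrightarrow> g \<in> carrier G \<and> h \<in> carrier G \<and> (\<exists>s\<in>S. h = g \<otimes>\<^bsub>G\<^esub> s)"

definition cay_colour :: "('a, 'c) monoid_scheme \<Rightarrow> 'a \<Rightarrow> 'a \<Rightarrow> 'a set" where
  "cay_colour G g h = {inv\<^bsub>G\<^esub> g \<otimes>\<^bsub>G\<^esub> h, inv\<^bsub>G\<^esub> (inv\<^bsub>G\<^esub> g \<otimes>\<^bsub>G\<^esub> h)}"

definition cay_graph_aut :: "('a, 'c) monoid_scheme \<Rightarrow> 'a set \<Rightarrow> ('a \<Rightarrow> 'a) \<Rightarrow> bool" where
  "cay_graph_aut G S \<phi> \<longleftrightarrow> bij_betw \<phi> (carrier G) (carrier G) \<and>
     (\<forall>g\<in>carrier G. \<forall>h\<in>carrier G. cay_adj G S g h \<longleftrightarrow> cay_adj G S (\<phi> g) (\<phi> h))"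

definition colour_permuting :: "('a, 'c) monoid_scheme \<Rightarrow> 'a set \<Rightarrow> ('a \<Rightarrow> 'a) \<Rightarrow> bool" where
  "colour_permuting G S \<phi> \<longleftrightarrow>
     (\<forall>g h g' h'. cay_adj G S g h \<and> cay_adj G S g' h' \<and> cay_colour G g h = cay_colour G g' h'
        \<longrightarrow> cay_colour G (\<phi> g) (\<phi> h) = cay_colour G (\<phi> g') (\<phi> h'))"

definition affine_map :: "('a, 'c) monoid_scheme \<Rightarrow> ('a \<Rightarrow> 'a) \<Rightarrow> bool" where
  "affine_map G \<phi> \<longleftrightarrow> (\<exists>\<alpha> g. \<alpha> \<in> iso G G \<and> g \<in> carrier G \<and>
      (\<forall>x\<in>carrier G. \<phi> x = \<alpha> (g \<otimes>\<^bsub>G\<^esub> x)))"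

definition strongly_CCA :: "('a, 'c) monoid_scheme \<Rightarrow> 'a set \<Rightarrow> bool" where
  "strongly_CCA G S \<longleftrightarrow>
     (\<forall>\<phi>. cay_graph_aut G S \<phi> \<and> colour_permuting G S \<phi> \<longrightarrow> affine_map G \<phi>)"

lemma group_Q8: "group Q8"
proof (rule groupI)
  fix x y z assume "x \<in> carrier Q8" "y \<in> carrier Q8" "z \<in> carrier Q8"
  show "x \<otimes>\<^bsub>Q8\<^esub> y \<otimes>\<^bsub>Q8\<^esub> z = x \<otimes>\<^bsub>Q8\<^esub> (y \<otimes>\<^bsub>Q8\<^esub> z)"
    unfolding Q8_def by (cases x; cases y; cases z) (auto, (case_tac b; case_tac ba; case_tac bb; simp)+)
next
  fix x assume "x \<in> carrier Q8"
  show "\<exists>y\<in>carrier Q8. y \<otimes>\<^bsub>Q8\<^esub> x = \<one>\<^bsub>Q8\<^esub>"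
  proof (cases x)
    case (Pair a b) then show ?thesis
      by (intro bexI[of _ "(if b = QOne then a else \<not> a, b)"]) (cases b; simp add: Q8_def)+
  qed
next
  fix x assume "x \<in> carrier Q8"
  then show "\<one>\<^bsub>Q8\<^esub> \<otimes>\<^bsub>Q8\<^esub> x = x" unfolding Q8_def by (cases x) auto
qed (auto simp: Q8_def)

end

theory Submission
  imports Defs
begin


context group begin

lemma lcanc [simp]: "x \<in> carrier G \<Longrightarrow> y \<in> carrier G \<Longrightarrow> x \<otimes> (inv x \<otimes> y) = y"
  by (simp add: m_assoc[symmetric])
lemma lcanc2 [simp]: "x \<in> carrier G \<Longrightarrow> y \<in> carrier G \<Longrightarrow> inv x \<otimes> (x \<otimes> y) = y"
  by (simp add: m_assoc[symmetric])

definition pq :: bool where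
  "pq \<longleftrightarrow> (\<forall>a\<in>carrier G. \<forall>b\<in>carrier G. a \<otimes> b = b \<otimes> a \<or> a \<otimes> b = inv b \<otimes> a)"

lemma lmul_eq: "x \<in> carrier G \<Longrightarrow> a \<in> carrier G \<Longrightarrow> b \<in> carrier G \<Longrightarrow> a = b \<Longrightarrow> x \<otimes> a = x \<otimes> b"
  by simp

lemma MI:
  assumes a: "a \<in> carrier G" and b: "b \<in> carrier G"
    and h1: "b \<otimes> a = inv a \<otimes> b" and h2: "a \<otimes> b = inv b \<otimes> a"
  shows "a \<otimes> a = b \<otimes> b" "a \<otimes> a \<otimes> (a \<otimes> a) = \<one>"
proof -
  have e1: "a \<otimes> b \<otimes> a = b"
    using h1 a b by (simp add: m_assoc)
  have e2: "a \<otimes> b \<otimes> a = inv b \<otimes> (a \<otimes> a)"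
    using h2 a b by (simp add: m_assoc)
  have "b = inv b \<otimes> (a \<otimes> a)" using e1 e2 by simp
  then have "b \<otimes> b = b \<otimes> (inv b \<otimes> (a \<otimes> a))" by simp
  then show sq: "a \<otimes> a = b \<otimes> b" using a b by simp
  have e3: "b \<otimes> (a \<otimes> a) = inv a \<otimes> inv a \<otimes> b"
  proof -
    have "b \<otimes> (a \<otimes> a) = (b \<otimes> a) \<otimes> a" using a b by (simp add: m_assoc)
    also have "\<dots> = inv a \<otimes> (b \<otimes> a)" using h1 a b by (simp add: m_assoc)
    also have "\<dots> = inv a \<otimes> inv a \<otimes> b" using h1 a b by (simp add: m_assoc)
    finally show ?thesis .
  qed
  have e4: "b \<otimes> (a \<otimes> a) = a \<otimes> a \<otimes> b"
    using sq a b by (simp add: m_assoc)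
  have "a \<otimes> a = inv a \<otimes> inv a"
    using e3 e4 a b by simp
  then have "a \<otimes> a \<otimes> (a \<otimes> a) = inv a \<otimes> inv a \<otimes> (a \<otimes> a)" by simp
  then show "a \<otimes> a \<otimes> (a \<otimes> a) = \<one>" using a by (simp add: m_assoc)
qed

end


locale hq = group G for G (structure) +
  fixes i j
  assumes pqG: "group.pq G"
    and ic: "i \<in> carrier G" and jc: "j \<in> carrier G" and nc: "i \<otimes> j \<noteq> j \<otimes> i"
begin

definition z where "z = i \<otimes> i"

lemma hi1: "j \<otimes> i = inv i \<otimes> j"
  using pqG ic jc nc unfolding pq_def by metis
lemma hi2: "i \<otimes> j = inv j \<otimes> i"
  using pqG ic jc nc unfolding pq_def by metis

lemma zc [simp]: "z \<in> carrier G" unfolding z_def using ic by simp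

lemma jj: "j \<otimes> j = z"
  using MI[OF ic jc hi1 hi2] unfolding z_def by simp
lemma zz: "z \<otimes> z = \<one>"
  using MI[OF ic jc hi1 hi2] unfolding z_def by simp

lemma invz [simp]: "inv z = z"
  using zz by (metis inv_equality zc)

lemma iinv: "inv i = z \<otimes> i"
proof -
  have "(z \<otimes> i) \<otimes> i = \<one>" using zz ic by (simp add: m_assoc z_def)
  then show ?thesis using inv_equality ic by simp
qed
lemma jinv: "inv j = z \<otimes> j"
proof -
  have "(z \<otimes> j) \<otimes> j = \<one>" using zz jc jj by (simp add: m_assoc)
  then show ?thesis using inv_equality jc by simp
qed

lemma zcomm: assumes g: "g \<in> carrier G" shows "g \<otimes> z = z \<otimes> g"
proof -
  have "g \<otimes> i = i \<otimes> g \<or> g \<otimes> i = inv i \<otimes> g" using pqG g ic unfolding pq_def by blast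
  then show ?thesis
  proof
    assume h: "g \<otimes> i = i \<otimes> g"
    have "g \<otimes> z = (g \<otimes> i) \<otimes> i" using g ic by (simp add: z_def m_assoc)
    also have "\<dots> = i \<otimes> (g \<otimes> i)" using h g ic by (simp add: m_assoc)
    also have "\<dots> = z \<otimes> g" using h g ic by (simp add: z_def m_assoc)
    finally show ?thesis .
  next
    assume h: "g \<otimes> i = inv i \<otimes> g"
    have "g \<otimes> z = (g \<otimes> i) \<otimes> i" using g ic by (simp add: z_def m_assoc)
    also have "\<dots> = inv i \<otimes> (g \<otimes> i)" using h g ic by (simp add: m_assoc)
    also have "\<dots> = inv i \<otimes> inv i \<otimes> g" using h g ic by (simp add: m_assoc)
    also have "\<dots> = inv z \<otimes> g" using ic by (simp add: z_def inv_mult_group)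
    finally show ?thesis by simp
  qed
qed

lemma ji: "j \<otimes> i = z \<otimes> (i \<otimes> j)"
  using hi1 iinv ic jc by (simp add: m_assoc)

lemma zne: "z \<noteq> \<one>"
proof
  assume "z = \<one>"
  then have "inv i = i" using iinv ic by simp
  then show False using hi1 nc by simp
qed

lemma q8rules:
  "i \<otimes> i = z" "j \<otimes> j = z" "j \<otimes> i = z \<otimes> (i \<otimes> j)" "z \<otimes> z = \<one>"
  "i \<otimes> z = z \<otimes> i" "j \<otimes> z = z \<otimes> j"
  "inv i = z \<otimes> i" "inv j = z \<otimes> j"
  using jj ji zz zcomm[OF ic] zcomm[OF jc] ic jc iinv jinv by (simp_all add: z_def[symmetric])

lemma q8rules2:
  assumes y: "y \<in> carrier G"
  shows "i \<otimes> (i \<otimes> y) = z \<otimes> y" "j \<otimes> (j \<otimes> y) = z \<otimes> y"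
    "j \<otimes> (i \<otimes> y) = z \<otimes> (i \<otimes> (j \<otimes> y))" "z \<otimes> (z \<otimes> y) = y"
    "i \<otimes> (z \<otimes> y) = z \<otimes> (i \<otimes> y)" "j \<otimes> (z \<otimes> y) = z \<otimes> (j \<otimes> y)"
  using q8rules y ic jc by (simp_all add: m_assoc[symmetric])

end


context hq begin

definition CC where "CC = {c \<in> carrier G. c \<otimes> i = i \<otimes> c \<and> c \<otimes> j = j \<otimes> c}"

lemma CC_sq: assumes c: "c \<in> CC" shows "c \<otimes> c = \<one>"
proof -
  have cc: "c \<in> carrier G" and ci: "c \<otimes> i = i \<otimes> c" and cj: "c \<otimes> j = j \<otimes> c"
    using c by (auto simp: CC_def)
  have "c \<otimes> i \<otimes> (c \<otimes> j) = c \<otimes> j \<otimes> (c \<otimes> i) \<or> c \<otimes> i \<otimes> (c \<otimes> j) = inv (c \<otimes> j) \<otimes> (c \<otimes> i)"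
    using pqG cc ic jc unfolding pq_def by simp
  moreover have e1: "c \<otimes> i \<otimes> (c \<otimes> j) = c \<otimes> c \<otimes> (i \<otimes> j)"
  proof -
    have "c \<otimes> i \<otimes> (c \<otimes> j) = c \<otimes> ((i \<otimes> c) \<otimes> j)" using cc ic jc by (simp add: m_assoc)
    also have "\<dots> = c \<otimes> ((c \<otimes> i) \<otimes> j)" using ci by simp
    finally show ?thesis using cc ic jc by (simp add: m_assoc)
  qed
  moreover have e2: "c \<otimes> j \<otimes> (c \<otimes> i) = c \<otimes> c \<otimes> (j \<otimes> i)"
  proof -
    have "c \<otimes> j \<otimes> (c \<otimes> i) = c \<otimes> ((j \<otimes> c) \<otimes> i)" using cc ic jc by (simp add: m_assoc)
    also have "\<dots> = c \<otimes> ((c \<otimes> j) \<otimes> i)" using cj by simp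
    finally show ?thesis using cc ic jc by (simp add: m_assoc)
  qed
  moreover have e3: "inv (c \<otimes> j) \<otimes> (c \<otimes> i) = inv j \<otimes> i"
    using cc ic jc by (simp add: inv_mult_group m_assoc)
  ultimately have "c \<otimes> c \<otimes> (i \<otimes> j) = c \<otimes> c \<otimes> (j \<otimes> i) \<or> c \<otimes> c \<otimes> (i \<otimes> j) = inv j \<otimes> i"
    by simp
  then show ?thesis
  proof
    assume "c \<otimes> c \<otimes> (i \<otimes> j) = c \<otimes> c \<otimes> (j \<otimes> i)"
    then have "i \<otimes> j = j \<otimes> i" using cc ic jc by simp
    with nc show ?thesis by simp
  next
    assume "c \<otimes> c \<otimes> (i \<otimes> j) = inv j \<otimes> i"
    then have "c \<otimes> c \<otimes> (i \<otimes> j) = \<one> \<otimes> (i \<otimes> j)" using hi2 ic jc by simp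
    then show ?thesis using cc ic jc by (metis m_closed right_cancel one_closed)
  qed
qed

lemma CC_carrier: "CC \<subseteq> carrier G" by (auto simp: CC_def)

lemma CC_mult: assumes c: "c \<in> CC" and d: "d \<in> CC" shows "c \<otimes> d \<in> CC"
proof -
  have cc: "c \<in> carrier G" "d \<in> carrier G" and ci: "c \<otimes> i = i \<otimes> c" and cj: "c \<otimes> j = j \<otimes> c"
    and di: "d \<otimes> i = i \<otimes> d" and dj: "d \<otimes> j = j \<otimes> d" using c d by (auto simp: CC_def)
  have "c \<otimes> d \<otimes> i = c \<otimes> (d \<otimes> i)" using cc ic by (simp add: m_assoc)
  also have "\<dots> = (c \<otimes> i) \<otimes> d" using di cc ic by (simp add: m_assoc)
  also have "\<dots> = i \<otimes> (c \<otimes> d)" using ci cc ic by (simp add: m_assoc)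
  finally have 1: "c \<otimes> d \<otimes> i = i \<otimes> (c \<otimes> d)" .
  have "c \<otimes> d \<otimes> j = c \<otimes> (d \<otimes> j)" using cc jc by (simp add: m_assoc)
  also have "\<dots> = (c \<otimes> j) \<otimes> d" using dj cc jc by (simp add: m_assoc)
  also have "\<dots> = j \<otimes> (c \<otimes> d)" using cj cc jc by (simp add: m_assoc)
  finally have 2: "c \<otimes> d \<otimes> j = j \<otimes> (c \<otimes> d)" .
  show ?thesis using 1 2 cc by (simp add: CC_def)
qed

lemma CC_comm: assumes c: "c \<in> CC" and d: "d \<in> CC" shows "c \<otimes> d = d \<otimes> c"
proof -
  have cd: "c \<otimes> d \<in> CC" using CC_mult c d .
  have cc: "c \<in> carrier G" "d \<in> carrier G" using c d CC_carrier by auto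
  have "inv (c \<otimes> d) = c \<otimes> d" using CC_sq[OF cd] cc by (metis inv_equality m_closed)
  moreover have "inv c = c" "inv d = d" using CC_sq c d cc by (metis inv_equality)+
  ultimately show ?thesis using cc by (simp add: inv_mult_group)
qed

lemma CC_inv: assumes c: "c \<in> CC" shows "inv c = c"
  using CC_sq[OF c] c CC_carrier by (metis inv_equality subsetD)

lemma zCC: "z \<in> CC"
  unfolding CC_def using zcomm ic jc by auto

lemma CC_comm_i: "c \<in> CC \<Longrightarrow> c \<otimes> i = i \<otimes> c" by (simp add: CC_def)
lemma CC_comm_j: "c \<in> CC \<Longrightarrow> c \<otimes> j = j \<otimes> c" by (simp add: CC_def)

definition iota :: "qunit \<Rightarrow> 'a" where
  "iota u = (case u of QOne \<Rightarrow> \<one> | QI \<Rightarrow> i | QJ \<Rightarrow> j | QK \<Rightarrow> i \<otimes> j)"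

lemma iota_c [simp]: "iota u \<in> carrier G"
  using ic jc by (cases u) (auto simp: iota_def)

lemma av: "a \<otimes> b = c \<otimes> d \<Longrightarrow> a \<in> carrier G \<Longrightarrow> b \<in> carrier G \<Longrightarrow> c \<in> carrier G \<Longrightarrow> d \<in> carrier G \<Longrightarrow> y \<in> carrier G \<Longrightarrow> a \<otimes> (b \<otimes> y) = c \<otimes> (d \<otimes> y)"
  by (metis m_assoc)

lemma decomp: assumes g: "g \<in> carrier G" shows "\<exists>u. \<exists>c\<in>CC. g = iota u \<otimes> c"
proof -
  have "g \<otimes> i = i \<otimes> g \<or> g \<otimes> i = inv i \<otimes> g" using pqG g ic unfolding pq_def by blast
  then have gi: "g \<otimes> i = i \<otimes> g \<or> g \<otimes> i = z \<otimes> (i \<otimes> g)" using g ic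
    by (simp add: q8rules m_assoc)
  have "g \<otimes> j = j \<otimes> g \<or> g \<otimes> j = inv j \<otimes> g" using pqG g jc unfolding pq_def by blast
  then have gj: "g \<otimes> j = j \<otimes> g \<or> g \<otimes> j = z \<otimes> (j \<otimes> g)" using g jc
    by (simp add: q8rules m_assoc)
  note r = q8rules q8rules2 m_assoc
  have zg: "g \<otimes> z = z \<otimes> g" using zcomm g by simp
  have zg2: "\<And>y. y \<in> carrier G \<Longrightarrow> g \<otimes> (z \<otimes> y) = z \<otimes> (g \<otimes> y)" using av[OF zg] g by simp
  show ?thesis
  proof (cases "g \<otimes> i = i \<otimes> g")
    case True note t1 = this
    have t1': "\<And>y. y \<in> carrier G \<Longrightarrow> g \<otimes> (i \<otimes> y) = i \<otimes> (g \<otimes> y)" using av[OF t1] g ic by simp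
    show ?thesis
    proof (cases "g \<otimes> j = j \<otimes> g")
      case True
      then have "g \<in> CC" using t1 g by (simp add: CC_def)
      then show ?thesis by (intro exI[of _ QOne] bexI[of _ g]) (simp_all add: iota_def g)
    next
      case False
      then have h2: "g \<otimes> j = z \<otimes> (j \<otimes> g)" using gj by simp
      have h2': "\<And>y. y \<in> carrier G \<Longrightarrow> g \<otimes> (j \<otimes> y) = z \<otimes> (j \<otimes> (g \<otimes> y))"
        using av[OF h2] g jc by (simp add: m_assoc)
      let ?c = "inv i \<otimes> g"
      have "?c \<in> CC" unfolding CC_def using g ic jc
        by (simp add: r t1 t1' h2 h2' zg zg2)
      then show ?thesis using g ic by (intro exI[of _ QI] bexI[of _ ?c]) (simp_all add: iota_def)
    qed
  next
    case False
    then have h1: "g \<otimes> i = z \<otimes> (i \<otimes> g)" using gi by simp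
    have h1': "\<And>y. y \<in> carrier G \<Longrightarrow> g \<otimes> (i \<otimes> y) = z \<otimes> (i \<otimes> (g \<otimes> y))"
      using av[OF h1] g ic by (simp add: m_assoc)
    show ?thesis
    proof (cases "g \<otimes> j = j \<otimes> g")
      case True note t2 = this
      have t2': "\<And>y. y \<in> carrier G \<Longrightarrow> g \<otimes> (j \<otimes> y) = j \<otimes> (g \<otimes> y)" using av[OF t2] g jc by simp
      let ?c = "inv j \<otimes> g"
      have "?c \<in> CC" unfolding CC_def using g ic jc
        by (simp add: r t2 t2' h1 h1' zg zg2)
      then show ?thesis using g jc by (intro exI[of _ QJ] bexI[of _ ?c]) (simp_all add: iota_def)
    next
      case False
      then have h2: "g \<otimes> j = z \<otimes> (j \<otimes> g)" using gj by simp
      have h2': "\<And>y. y \<in> carrier G \<Longrightarrow> g \<otimes> (j \<otimes> y) = z \<otimes> (j \<otimes> (g \<otimes> y))"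
        using av[OF h2] g jc by (simp add: m_assoc)
      let ?c = "inv (i \<otimes> j) \<otimes> g"
      have "?c \<in> CC" unfolding CC_def using g ic jc
        by (simp add: r inv_mult_group h1 h1' h2 h2' zg zg2)
      then show ?thesis using g ic jc by (intro exI[of _ QK] bexI[of _ ?c]) (simp_all add: iota_def)
    qed
  qed
qed

end


context hq begin

definition Bfam where
  "Bfam = {B. B \<subseteq> CC \<and> \<one> \<in> B \<and> (\<forall>x\<in>B. \<forall>y\<in>B. x \<otimes> y \<in> B) \<and> z \<notin> B}"

lemma one_CC: "\<one> \<in> CC" using ic jc by (simp add: CC_def)

lemma exB: "\<exists>B\<in>Bfam. \<forall>W\<in>Bfam. B \<subseteq> W \<longrightarrow> W = B"
proof (rule Zorn_Lemma2, intro ballI)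
  fix Ch assume Ch: "Ch \<in> chains Bfam"
  show "\<exists>U\<in>Bfam. \<forall>W\<in>Ch. W \<subseteq> U"
  proof (cases "Ch = {}")
    case True
    have "{\<one>} \<in> Bfam" using one_CC zne by (auto simp: Bfam_def)
    then show ?thesis using True by blast
  next
    case False
    have sub: "Ch \<subseteq> Bfam" and ch: "\<forall>W\<in>Ch. \<forall>V\<in>Ch. W \<subseteq> V \<or> V \<subseteq> W"
      using Ch by (auto simp: chains_def chain_subset_def)
    have "\<Union>Ch \<in> Bfam"
      unfolding Bfam_def
    proof (intro CollectI conjI ballI)
      show "\<Union>Ch \<subseteq> CC" using sub by (auto simp: Bfam_def)
      show "\<one> \<in> \<Union>Ch" using sub False by (auto simp: Bfam_def)
      show "z \<notin> \<Union>Ch" using sub by (auto simp: Bfam_def)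
      fix x y assume x: "x \<in> \<Union>Ch" and y: "y \<in> \<Union>Ch"
      then obtain W V where X: "W \<in> Ch" "x \<in> W" and Y: "V \<in> Ch" "y \<in> V" by auto
      show "x \<otimes> y \<in> \<Union>Ch"
      proof (cases "W \<subseteq> V")
        case True
        then have "x \<otimes> y \<in> V" using X Y sub by (auto simp: Bfam_def)
        then show ?thesis using Y by auto
      next
        case False
        then have "V \<subseteq> W" using ch X Y by blast
        then have "x \<otimes> y \<in> W" using X Y sub by (auto simp: Bfam_def)
        then show ?thesis using X by auto
      qed
    qed
    then show ?thesis by blast
  qed
qed

definition BB where "BB = (SOME B. B \<in> Bfam \<and> (\<forall>W\<in>Bfam. B \<subseteq> W \<longrightarrow> W = B))"

lemma BB_props: "BB \<in> Bfam" "\<And>W. W \<in> Bfam \<Longrightarrow> BB \<subseteq> W \<Longrightarrow> W = BB"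
proof -
  have "BB \<in> Bfam \<and> (\<forall>W\<in>Bfam. BB \<subseteq> W \<longrightarrow> W = BB)"
    unfolding BB_def using exB by (rule someI2_bex) auto
  then show "BB \<in> Bfam" "\<And>W. W \<in> Bfam \<Longrightarrow> BB \<subseteq> W \<Longrightarrow> W = BB" by auto
qed

lemma BB_CC: "BB \<subseteq> CC" and BB_one: "\<one> \<in> BB" and BB_mult: "x \<in> BB \<Longrightarrow> y \<in> BB \<Longrightarrow> x \<otimes> y \<in> BB"
  and z_BB: "z \<notin> BB"
  using BB_props(1) by (auto simp: Bfam_def)

lemma BB_c: "x \<in> BB \<Longrightarrow> x \<in> carrier G" using BB_CC CC_carrier by auto

lemma CC_cover: assumes c: "c \<in> CC" shows "c \<in> BB \<or> (\<exists>b\<in>BB. c = z \<otimes> b)"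
proof (rule ccontr)
  assume nc: "\<not> (c \<in> BB \<or> (\<exists>b\<in>BB. c = z \<otimes> b))"
  have cc: "c \<in> carrier G" using c CC_carrier by auto
  let ?B' = "BB \<union> (\<lambda>b. c \<otimes> b) ` BB"
  have "?B' \<in> Bfam"
    unfolding Bfam_def
  proof (intro CollectI conjI ballI)
    show "?B' \<subseteq> CC" using BB_CC c CC_mult by auto
    show "\<one> \<in> ?B'" using BB_one by auto
    show "z \<notin> ?B'"
    proof
      assume "z \<in> ?B'"
      then obtain b where b: "b \<in> BB" "z = c \<otimes> b" using z_BB by auto
      have bc: "b \<in> carrier G" using b BB_c by auto
      have "z \<otimes> inv b = c" using b bc cc by (simp add: m_assoc)
      then have "c = z \<otimes> b" using CC_inv[of b] b BB_CC by auto
      then show False using nc b by auto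
    qed
    fix x y assume x: "x \<in> ?B'" and y: "y \<in> ?B'"
    show "x \<otimes> y \<in> ?B'"
    proof -
      { fix b1 b2 assume b1: "b1 \<in> BB" and b2: "b2 \<in> BB"
        have b1c: "b1 \<in> carrier G" and b2c: "b2 \<in> carrier G" using b1 b2 BB_c by auto
        have comm1: "b1 \<otimes> (c \<otimes> b2) = c \<otimes> (b1 \<otimes> b2)"
            using CC_comm[of b1 c] b1 c BB_CC b1c b2c cc by (auto simp: m_assoc[symmetric])
        have "b1 \<otimes> b2 \<in> ?B'" using BB_mult b1 b2 by auto
        moreover have "b1 \<otimes> (c \<otimes> b2) \<in> ?B'"
          using comm1 BB_mult b1 b2 by auto
        moreover have "c \<otimes> b1 \<otimes> b2 \<in> ?B'"
          using BB_mult b1 b2 b1c b2c cc by (auto simp: m_assoc)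
        moreover have "c \<otimes> b1 \<otimes> (c \<otimes> b2) \<in> ?B'"
        proof -
          have "c \<otimes> b1 \<otimes> (c \<otimes> b2) = c \<otimes> (b1 \<otimes> (c \<otimes> b2))" using b1c b2c cc by (simp add: m_assoc)
          also have "\<dots> = c \<otimes> (c \<otimes> (b1 \<otimes> b2))"
            using comm1 by simp
          also have "\<dots> = b1 \<otimes> b2" using CC_sq[OF c] b1c b2c cc by (simp add: m_assoc[symmetric])
          finally show ?thesis using BB_mult b1 b2 by auto
        qed
        ultimately have "b1 \<otimes> b2 \<in> ?B' \<and> b1 \<otimes> (c \<otimes> b2) \<in> ?B' \<and> c \<otimes> b1 \<otimes> b2 \<in> ?B' \<and> c \<otimes> b1 \<otimes> (c \<otimes> b2) \<in> ?B'"
          by blast }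
      then show ?thesis using x y by auto
    qed
  qed
  moreover have "BB \<subseteq> ?B'" by auto
  ultimately have "?B' = BB" using BB_props(2) by blast
  moreover have "c \<in> ?B'" using BB_one cc by (auto intro!: image_eqI[of _ _ \<one>])
  ultimately show False using nc by auto
qed

end


context hq begin

definition Bm :: "'a monoid" where
  "Bm = \<lparr>carrier = BB, monoid.mult = (\<otimes>), one = \<one>\<rparr>"

lemma BB_inv: "b \<in> BB \<Longrightarrow> inv b = b" using CC_inv BB_CC by auto

lemma Bm_comm_group: "comm_group Bm"
proof (rule comm_groupI)
  show "\<And>x y. x \<in> carrier Bm \<Longrightarrow> y \<in> carrier Bm \<Longrightarrow> x \<otimes>\<^bsub>Bm\<^esub> y \<in> carrier Bm"
    using BB_mult by (simp add: Bm_def)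
  show "\<one>\<^bsub>Bm\<^esub> \<in> carrier Bm" using BB_one by (simp add: Bm_def)
  show "\<And>x y w. x \<in> carrier Bm \<Longrightarrow> y \<in> carrier Bm \<Longrightarrow> w \<in> carrier Bm \<Longrightarrow>
      x \<otimes>\<^bsub>Bm\<^esub> y \<otimes>\<^bsub>Bm\<^esub> w = x \<otimes>\<^bsub>Bm\<^esub> (y \<otimes>\<^bsub>Bm\<^esub> w)"
    using BB_c by (simp add: Bm_def m_assoc)
  show "\<And>x y. x \<in> carrier Bm \<Longrightarrow> y \<in> carrier Bm \<Longrightarrow> x \<otimes>\<^bsub>Bm\<^esub> y = y \<otimes>\<^bsub>Bm\<^esub> x"
    using CC_comm BB_CC by (auto simp: Bm_def)
  show "\<And>x. x \<in> carrier Bm \<Longrightarrow> \<one>\<^bsub>Bm\<^esub> \<otimes>\<^bsub>Bm\<^esub> x = x"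
    using BB_c by (simp add: Bm_def)
  show "\<And>x. x \<in> carrier Bm \<Longrightarrow> \<exists>y\<in>carrier Bm. y \<otimes>\<^bsub>Bm\<^esub> x = \<one>\<^bsub>Bm\<^esub>"
    using CC_sq BB_CC by (auto simp: Bm_def)
qed

lemma Bm_sq: "\<forall>b\<in>carrier Bm. b \<otimes>\<^bsub>Bm\<^esub> b = \<one>\<^bsub>Bm\<^esub>"
  using CC_sq BB_CC by (auto simp: Bm_def)

definition zp :: "bool \<Rightarrow> 'a" where "zp s = (if s then z else \<one>)"

lemma zp_c [simp]: "zp s \<in> carrier G" by (simp add: zp_def)

lemma zp_mult: "zp s \<otimes> zp t = zp (s \<noteq> t)"
  using zz by (simp add: zp_def)

lemma zp_CC: "zp s \<in> CC" using zCC one_CC by (simp add: zp_def)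

lemma iota_mult: "iota u \<otimes> iota v = zp (fst (qunit_mult u v)) \<otimes> iota (snd (qunit_mult u v))"
  using ic jc by (cases u; cases v) (simp_all add: iota_def zp_def q8rules q8rules2 m_assoc)

lemma CC_iota: "c \<in> CC \<Longrightarrow> c \<otimes> iota v = iota v \<otimes> c"
proof -
  assume c: "c \<in> CC"
  then have cc: "c \<in> carrier G" and ci: "c \<otimes> i = i \<otimes> c" and cj: "c \<otimes> j = j \<otimes> c"
    by (auto simp: CC_def)
  have "c \<otimes> (i \<otimes> j) = i \<otimes> j \<otimes> c"
  proof -
    have "c \<otimes> (i \<otimes> j) = (c \<otimes> i) \<otimes> j" using cc ic jc by (simp add: m_assoc)
    also have "\<dots> = i \<otimes> (c \<otimes> j)" using ci cc ic jc by (simp add: m_assoc)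
    also have "\<dots> = i \<otimes> j \<otimes> c" using cj cc ic jc by (simp add: m_assoc)
    finally show ?thesis .
  qed
  then show ?thesis using ci cj cc by (cases v) (simp_all add: iota_def)
qed

definition Phi :: "(bool \<times> qunit) \<times> 'a \<Rightarrow> 'a" where
  "Phi x = zp (fst (fst x)) \<otimes> (iota (snd (fst x)) \<otimes> snd x)"

lemma Phi_mult:
  assumes b: "b \<in> BB" and b': "b' \<in> BB"
  shows "Phi ((s,u),b) \<otimes> Phi ((t,v),b') = Phi (q8_mult (s,u) (t,v), b \<otimes> b')"
proof -
  have bc: "b \<in> carrier G" "b' \<in> carrier G" using b b' BB_c by auto
  have bC: "b \<in> CC" using b BB_CC by auto
  have "Phi ((s,u),b) \<otimes> Phi ((t,v),b') = zp s \<otimes> (iota u \<otimes> (b \<otimes> (zp t \<otimes> (iota v \<otimes> b'))))"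
    using bc by (simp add: Phi_def m_assoc)
  also have "b \<otimes> (zp t \<otimes> (iota v \<otimes> b')) = zp t \<otimes> (iota v \<otimes> (b \<otimes> b'))"
  proof -
    have "b \<otimes> (zp t \<otimes> (iota v \<otimes> b')) = (b \<otimes> zp t) \<otimes> (iota v \<otimes> b')" using bc by (simp add: m_assoc)
    also have "\<dots> = zp t \<otimes> ((b \<otimes> iota v) \<otimes> b')" using CC_comm[OF bC zp_CC] bc by (simp add: m_assoc)
    also have "\<dots> = zp t \<otimes> (iota v \<otimes> (b \<otimes> b'))" using CC_iota[OF bC] bc by (simp add: m_assoc)
    finally show ?thesis .
  qed
  also have "iota u \<otimes> (zp t \<otimes> (iota v \<otimes> (b \<otimes> b'))) = zp t \<otimes> (iota u \<otimes> (iota v \<otimes> (b \<otimes> b')))"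
  proof -
    have "iota u \<otimes> zp t = zp t \<otimes> iota u" using zcomm[of "iota u"] by (simp add: zp_def)
    then show ?thesis using bc by (simp add: m_assoc[symmetric])
  qed
  also have "zp s \<otimes> (zp t \<otimes> (iota u \<otimes> (iota v \<otimes> (b \<otimes> b')))) =
      (zp s \<otimes> zp t) \<otimes> ((iota u \<otimes> iota v) \<otimes> (b \<otimes> b'))" using bc by (simp add: m_assoc)
  also have "\<dots> = zp (s \<noteq> t) \<otimes> (zp (fst (qunit_mult u v)) \<otimes> iota (snd (qunit_mult u v)) \<otimes> (b \<otimes> b'))"
    by (simp add: zp_mult iota_mult)
  also have "\<dots> = (zp (s \<noteq> t) \<otimes> zp (fst (qunit_mult u v))) \<otimes> (iota (snd (qunit_mult u v)) \<otimes> (b \<otimes> b'))"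
    using bc by (simp add: m_assoc)
  also have "\<dots> = zp ((s \<noteq> t) \<noteq> fst (qunit_mult u v)) \<otimes> (iota (snd (qunit_mult u v)) \<otimes> (b \<otimes> b'))"
    by (simp only: zp_mult)
  also have "\<dots> = Phi (q8_mult (s,u) (t,v), b \<otimes> b')"
  proof -
    have xor: "((s \<noteq> t) \<noteq> fst (qunit_mult u v)) = (s \<noteq> (t \<noteq> fst (qunit_mult u v)))" by auto
    show ?thesis by (simp only: xor) (simp add: Phi_def)
  qed
  finally show ?thesis .
qed

lemma Phi_hom: "Phi \<in> hom (Q8 \<times>\<times> Bm) G"
proof (rule homI)
  fix x assume "x \<in> carrier (Q8 \<times>\<times> Bm)"
  then show "Phi x \<in> carrier G" using BB_c by (auto simp: Phi_def Bm_def)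
next
  fix x y assume x: "x \<in> carrier (Q8 \<times>\<times> Bm)" and y: "y \<in> carrier (Q8 \<times>\<times> Bm)"
  obtain s u b where xe: "x = ((s,u),b)" by (metis prod.collapse)
  obtain t v b' where ye: "y = ((t,v),b')" by (metis prod.collapse)
  have b: "b \<in> BB" "b' \<in> BB" using x y xe ye by (auto simp: Bm_def)
  show "Phi (x \<otimes>\<^bsub>Q8 \<times>\<times> Bm\<^esub> y) = Phi x \<otimes> Phi y"
    using Phi_mult[OF b] xe ye by (simp add: Q8_def Bm_def)
qed

lemma iota_CC: "iota u \<in> CC \<Longrightarrow> u = QOne"
proof (cases u)
  case QI then show "iota u \<in> CC \<Longrightarrow> u = QOne" using nc by (auto simp: iota_def CC_def)
next
  case QJ then show "iota u \<in> CC \<Longrightarrow> u = QOne" using nc by (auto simp: iota_def CC_def)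
next
  case QK
  show "iota u \<in> CC \<Longrightarrow> u = QOne"
  proof -
    assume "iota u \<in> CC"
    then have "i \<otimes> j \<otimes> i = i \<otimes> (i \<otimes> j)" using QK by (simp add: iota_def CC_def)
    then have "i \<otimes> (j \<otimes> i) = i \<otimes> (i \<otimes> j)" using ic jc by (simp add: m_assoc)
    then have "j \<otimes> i = i \<otimes> j" using ic jc by simp
    then show ?thesis using nc by simp
  qed
qed simp

lemma group_Bm: "group Bm" using Bm_comm_group comm_group.axioms(2) by blast
lemma group_DP: "group (Q8 \<times>\<times> Bm)" using DirProd_group[OF group_Q8 group_Bm] .

lemma Phi_inj: "inj_on Phi (carrier (Q8 \<times>\<times> Bm))"
proof -
  interpret gh: group_hom "Q8 \<times>\<times> Bm" G Phi
    using group_DP Phi_hom by (simp add: group_hom_def group_hom_axioms_def is_group)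
  have "kernel (Q8 \<times>\<times> Bm) G Phi = {\<one>\<^bsub>Q8 \<times>\<times> Bm\<^esub>}"
  proof
    show "{\<one>\<^bsub>Q8 \<times>\<times> Bm\<^esub>} \<subseteq> kernel (Q8 \<times>\<times> Bm) G Phi"
      using gh.hom_one BB_one by (auto simp: kernel_def Q8_def Bm_def)
    show "kernel (Q8 \<times>\<times> Bm) G Phi \<subseteq> {\<one>\<^bsub>Q8 \<times>\<times> Bm\<^esub>}"
    proof
      fix x assume "x \<in> kernel (Q8 \<times>\<times> Bm) G Phi"
      then have xc: "x \<in> carrier (Q8 \<times>\<times> Bm)" and px: "Phi x = \<one>" by (auto simp: kernel_def)
      obtain s u b where xe: "x = ((s,u),b)" by (metis prod.collapse)
      have b: "b \<in> BB" using xc xe by (auto simp: Bm_def)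
      have bc: "b \<in> carrier G" using b BB_c by auto
      have e: "zp s \<otimes> (iota u \<otimes> b) = \<one>" using px xe by (simp add: Phi_def)
      have zpinv: "inv (zp s) = zp s" by (simp add: zp_def)
      have "iota u \<otimes> b = zp s" using e bc
        by (metis inv_equality m_closed zp_c iota_c inv_comm zpinv)
      then have "iota u = zp s \<otimes> inv b" using bc by (simp add: m_assoc[symmetric] inv_solve_right)
      also have "\<dots> = zp s \<otimes> b" using BB_inv b by simp
      finally have "iota u \<in> CC" using CC_mult zp_CC b BB_CC by auto
      then have u: "u = QOne" using iota_CC by simp
      then have "zp s \<otimes> b = \<one>" using e bc by (simp add: iota_def)
      then have "inv b = zp s" using bc by (metis inv_equality zp_c)
      then have "b = zp s" using BB_inv b by simp
      then have "\<not> s" "b = \<one>" using b z_BB by (auto simp: zp_def split: if_splits)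
      then show "x \<in> {\<one>\<^bsub>Q8 \<times>\<times> Bm\<^esub>}" using xe u by (simp add: Q8_def Bm_def)
    qed
  qed
  then show ?thesis using gh.inj_iff_trivial_ker by simp
qed

lemma Phi_surj: "Phi ` carrier (Q8 \<times>\<times> Bm) = carrier G"
proof
  show "Phi ` carrier (Q8 \<times>\<times> Bm) \<subseteq> carrier G" using Phi_hom hom_carrier by blast
  show "carrier G \<subseteq> Phi ` carrier (Q8 \<times>\<times> Bm)"
  proof
    fix g assume g: "g \<in> carrier G"
    obtain u c where c: "c \<in> CC" and ge: "g = iota u \<otimes> c" using decomp[OF g] by blast
    from CC_cover[OF c] show "g \<in> Phi ` carrier (Q8 \<times>\<times> Bm)"
    proof
      assume "c \<in> BB"
      then have "((False,u),c) \<in> carrier (Q8 \<times>\<times> Bm)" by (simp add: Q8_def Bm_def)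
      moreover have "Phi ((False,u),c) = g" using ge c CC_carrier by (auto simp: Phi_def zp_def)
      ultimately show ?thesis by force
    next
      assume "\<exists>b\<in>BB. c = z \<otimes> b"
      then obtain b where b: "b \<in> BB" and cb: "c = z \<otimes> b" by blast
      have bc: "b \<in> carrier G" using b BB_c by auto
      have "((True,u),b) \<in> carrier (Q8 \<times>\<times> Bm)" using b by (simp add: Q8_def Bm_def)
      moreover have "Phi ((True,u),b) = g"
      proof -
        have "iota u \<otimes> z = z \<otimes> iota u" using zcomm[of "iota u"] by simp
        then show ?thesis using ge cb bc by (simp add: Phi_def zp_def m_assoc[symmetric])
      qed
      ultimately show ?thesis by force
    qed
  qed
qed

lemma hamiltonian: "hamiltonian_2group G"
proof -
  have "Phi \<in> iso (Q8 \<times>\<times> Bm) G"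
    using Phi_hom Phi_inj Phi_surj by (simp add: iso_def bij_betw_def)
  then have "inv_into (carrier (Q8 \<times>\<times> Bm)) Phi \<in> iso G (Q8 \<times>\<times> Bm)"
    using group.iso_set_sym[OF group_DP] by blast
  then have "G \<cong> Q8 \<times>\<times> Bm" by (rule is_isoI)
  then show ?thesis unfolding hamiltonian_2group_def using Bm_comm_group Bm_sq by blast
qed

end

lemma (in group) pq_hamiltonian:
  assumes "pq" and "\<not> (\<forall>a\<in>carrier G. \<forall>b\<in>carrier G. a \<otimes> b = b \<otimes> a)"
  shows "hamiltonian_2group G"
proof -
  obtain i j where "i \<in> carrier G" "j \<in> carrier G" "i \<otimes> j \<noteq> j \<otimes> i" using assms(2) by blast
  then interpret hq G i j using assms(1) by unfold_locales auto
  show ?thesis by (rule hamiltonian)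
qed


context group begin

definition cpg :: "('a \<Rightarrow> 'a) \<Rightarrow> bool" where
  "cpg h \<longleftrightarrow> (\<forall>x\<in>carrier G. h x = x \<or> h x = inv x) \<and>
     (\<forall>a\<in>carrier G. \<forall>b\<in>carrier G. inv (h a) \<otimes> h (a \<otimes> b) = b \<or> inv (h a) \<otimes> h (a \<otimes> b) = inv b)"

definition dic :: "'a set \<Rightarrow> 'a \<Rightarrow> bool" where
  "dic A z \<longleftrightarrow> subgroup A G \<and> z \<noteq> \<one> \<and> (\<exists>x\<in>carrier G. x \<notin> A) \<and>
     (\<forall>x\<in>carrier G - A. \<forall>y\<in>carrier G - A. x \<otimes> y \<in> A) \<and>
     (\<forall>x\<in>carrier G - A. x \<otimes> x = z) \<and>
     (\<forall>x\<in>carrier G - A. \<forall>a\<in>A. x \<otimes> a = inv a \<otimes> x)"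

lemma inv_eq_imp: "a \<in> carrier G \<Longrightarrow> b \<in> carrier G \<Longrightarrow> inv a = inv b \<Longrightarrow> a = b"
  by (metis inv_inv)

lemma sq1_inv: "x \<in> carrier G \<Longrightarrow> x \<otimes> x = \<one> \<Longrightarrow> inv x = x"
  by (metis inv_equality)

lemma inv_self_sq: "x \<in> carrier G \<Longrightarrow> inv x = x \<Longrightarrow> x \<otimes> x = \<one>"
  by (metis r_inv)

end

locale cpm = group G for G (structure) +
  fixes h
  assumes cp: "cpg h"
begin

definition I where "I = {x \<in> carrier G. h x \<noteq> x}"

lemma hc: "x \<in> carrier G \<Longrightarrow> h x \<in> carrier G"
  using cp unfolding cpg_def by (metis inv_closed)

lemma hI: "x \<in> I \<Longrightarrow> h x = inv x \<and> inv x \<noteq> x \<and> x \<in> carrier G"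
  using cp unfolding cpg_def I_def by auto

lemma hF: "x \<in> carrier G \<Longrightarrow> x \<notin> I \<Longrightarrow> h x = x"
  unfolding I_def by auto

lemma good: "a \<in> carrier G \<Longrightarrow> b \<in> carrier G \<Longrightarrow>
   inv (h a) \<otimes> h (a \<otimes> b) = b \<or> inv (h a) \<otimes> h (a \<otimes> b) = inv b"
  using cp unfolding cpg_def by blast

lemma goodc: assumes a: "a \<in> carrier G" and c: "c \<in> carrier G"
  shows "inv (h a) \<otimes> h c = inv a \<otimes> c \<or> inv (h a) \<otimes> h c = inv c \<otimes> a"
proof -
  have "a \<otimes> (inv a \<otimes> c) = c" using a c by simp
  then show ?thesis using good[of a "inv a \<otimes> c"] a c by (simp add: inv_mult_group)
qed

lemma R1: assumes x: "x \<in> I" and y: "y \<in> carrier G" "y \<notin> I"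
  shows "x \<otimes> y = inv y \<otimes> x"
proof -
  have xc: "x \<in> carrier G" and hx: "h x = inv x" and nx: "inv x \<noteq> x" using hI[OF x] by auto
  have hy: "h y = y" using hF y by auto
  have "inv y \<otimes> inv x = inv y \<otimes> x \<or> inv y \<otimes> inv x = inv x \<otimes> y"
    using goodc[OF y(1) xc] hx hy by simp
  moreover have "inv y \<otimes> inv x \<noteq> inv y \<otimes> x" using nx xc y by simp
  ultimately have "inv y \<otimes> inv x = inv x \<otimes> y" by blast
  then have "inv (inv y \<otimes> inv x) = inv (inv x \<otimes> y)" by simp
  then show ?thesis using xc y by (simp add: inv_mult_group)
qed

lemma R2: assumes x: "x \<in> I" and y: "y \<in> I"
  shows "x \<otimes> y = y \<otimes> x \<or> x \<otimes> x = y \<otimes> y"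
proof -
  have xc: "x \<in> carrier G" and hx: "h x = inv x" using hI[OF x] by auto
  have yc: "y \<in> carrier G" and hy: "h y = inv y" using hI[OF y] by auto
  have "x \<otimes> inv y = inv x \<otimes> y \<or> x \<otimes> inv y = inv y \<otimes> x"
    using goodc[OF xc yc] hx hy xc yc by simp
  then show ?thesis
  proof
    assume e: "x \<otimes> inv y = inv x \<otimes> y"
    have "x \<otimes> (x \<otimes> inv y) \<otimes> y = x \<otimes> (inv x \<otimes> y) \<otimes> y" using e by simp
    then have "x \<otimes> x = y \<otimes> y" using xc yc by (simp add: m_assoc)
    then show ?thesis by simp
  next
    assume e: "x \<otimes> inv y = inv y \<otimes> x"
    have "y \<otimes> (x \<otimes> inv y) \<otimes> y = y \<otimes> (inv y \<otimes> x) \<otimes> y" using e by simp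
    then have "y \<otimes> x = x \<otimes> y" using xc yc by (simp add: m_assoc)
    then show ?thesis by simp
  qed
qed

lemma sqI: assumes x: "x \<in> I" shows "h (x \<otimes> x) = inv (x \<otimes> x)"
proof -
  have xc: "x \<in> carrier G" and hx: "h x = inv x" and nx: "inv x \<noteq> x" using hI[OF x] by auto
  have hxx: "h (x \<otimes> x) \<in> carrier G" using hc xc by simp
  have "x \<otimes> h (x \<otimes> x) = x \<or> x \<otimes> h (x \<otimes> x) = inv x" using good[OF xc xc] hx xc by simp
  then show ?thesis
  proof
    assume "x \<otimes> h (x \<otimes> x) = x"
    then have e: "h (x \<otimes> x) = \<one>" using xc hxx by simp
    have "h (x \<otimes> x) = x \<otimes> x \<or> h (x \<otimes> x) = inv (x \<otimes> x)" using cp xc unfolding cpg_def by blast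
    then have "x \<otimes> x = \<one>" using e xc by (metis inv_eq_1_iff m_closed)
    then have "inv x = x" using sq1_inv xc by simp
    then show ?thesis using nx by simp
  next
    assume "x \<otimes> h (x \<otimes> x) = inv x"
    then have "h (x \<otimes> x) = inv x \<otimes> inv x" using xc hxx by (metis inv_solve_left inv_closed)
    then show ?thesis using xc by (simp add: inv_mult_group)
  qed
qed

lemma invI: assumes x: "x \<in> I" shows "inv x \<in> I"
proof (rule ccontr)
  assume n: "inv x \<notin> I"
  have xc: "x \<in> carrier G" and nx: "inv x \<noteq> x" using hI[OF x] by auto
  have "x \<otimes> inv x = inv (inv x) \<otimes> x" using R1[OF x _ n] xc by simp
  then have "x \<otimes> x = \<one>" using xc by simp
  then show False using nx sq1_inv xc by simp
qed

lemma notI_inv: "y \<in> carrier G \<Longrightarrow> y \<notin> I \<Longrightarrow> inv y \<notin> I"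
  using invI by (metis inv_inv)

lemma sq1_notI: "y \<in> carrier G \<Longrightarrow> y \<otimes> y = \<one> \<Longrightarrow> y \<notin> I"
  using hI sq1_inv by fastforce

lemma one_notI: "\<one> \<notin> I" using sq1_notI by simp

lemma Ic: "x \<in> I \<Longrightarrow> x \<in> carrier G" using hI by auto

end


context cpm begin

lemma caseA: assumes A: "\<forall>y\<in>carrier G. y \<notin> I \<longrightarrow> y \<otimes> y = \<one>" shows "pq"
  unfolding pq_def
proof (intro ballI)
  fix a b assume a: "a \<in> carrier G" and b: "b \<in> carrier G"
  show "a \<otimes> b = b \<otimes> a \<or> a \<otimes> b = inv b \<otimes> a"
  proof (cases "a \<in> I")
    case aI: True
    show ?thesis
    proof (cases "b \<in> I")
      case False then show ?thesis using R1[OF aI b] by simp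
    next
      case bI: True
      show ?thesis
      proof (cases "a \<otimes> b \<in> I")
        case True
        have "a \<otimes> (a \<otimes> b) = a \<otimes> b \<otimes> a \<or> a \<otimes> a = a \<otimes> b \<otimes> (a \<otimes> b)" using R2[OF aI True] .
        then show ?thesis
        proof
          assume "a \<otimes> (a \<otimes> b) = a \<otimes> b \<otimes> a"
          then have "a \<otimes> b = b \<otimes> a" using a b by (simp add: m_assoc)
          then show ?thesis by simp
        next
          assume "a \<otimes> a = a \<otimes> b \<otimes> (a \<otimes> b)"
          then have "a = b \<otimes> (a \<otimes> b)" using a b by (simp add: m_assoc)
          then have "inv b \<otimes> a = a \<otimes> b" using a b inv_solve_left'[of "a \<otimes> b" b a] by simp
          then show ?thesis by simp
        qed
      next
        case False
        have abc: "a \<otimes> b \<in> carrier G" using a b by simp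
        have sq: "a \<otimes> b \<otimes> (a \<otimes> b) = \<one>" using A abc False by blast
        have "a \<otimes> (a \<otimes> b) = inv (a \<otimes> b) \<otimes> a" using R1[OF aI abc False] .
        also have "inv (a \<otimes> b) = a \<otimes> b" using sq1_inv[OF abc sq] .
        finally have "a \<otimes> (a \<otimes> b) = a \<otimes> (b \<otimes> a)" using a b by (simp add: m_assoc)
        then show ?thesis using a b by simp
      qed
    qed
  next
    case aF: False
    have ia: "inv a = a" using A a aF sq1_inv by blast
    show ?thesis
    proof (cases "b \<in> I")
      case True
      have "b \<otimes> a = inv a \<otimes> b" using R1[OF True a aF] .
      then show ?thesis using ia by simp
    next
      case bF: False
      have ib: "inv b = b" using A b bF sq1_inv by blast
      have abc: "a \<otimes> b \<in> carrier G" using a b by simp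
      show ?thesis
      proof (cases "a \<otimes> b \<in> I")
        case True
        have "a \<otimes> b \<otimes> a = inv a \<otimes> (a \<otimes> b)" using R1[OF True a aF] .
        then have "a \<otimes> b \<otimes> a = b" using a b by simp
        then have "a \<otimes> b \<otimes> a \<otimes> a = b \<otimes> a" by simp
        then have "a \<otimes> b = b \<otimes> a" using a b A aF by (simp add: m_assoc)
        then show ?thesis by simp
      next
        case False
        have "inv (a \<otimes> b) = a \<otimes> b" using A abc False sq1_inv by blast
        then have "b \<otimes> a = a \<otimes> b" using ia ib a b by (simp add: inv_mult_group)
        then show ?thesis by simp
      qed
    qed
  qed
qed

context
  fixes y0
  assumes y0: "y0 \<in> carrier G" "y0 \<notin> I" "y0 \<otimes> y0 \<noteq> \<one>"
begin

lemma B0: assumes x: "x \<in> I" and y: "y \<in> carrier G" "y \<notin> I" "y \<otimes> y \<noteq> \<one>"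
  shows "x \<otimes> y \<noteq> y \<otimes> x"
proof
  assume e: "x \<otimes> y = y \<otimes> x"
  have "x \<otimes> y = inv y \<otimes> x" using R1[OF x y(1,2)] .
  then have "inv y = y" using e Ic[OF x] y by simp
  then show False using y inv_self_sq by simp
qed

lemma B1: assumes x: "x \<in> I" shows "x \<otimes> x \<notin> I" "x \<otimes> x \<otimes> (x \<otimes> x) = \<one>"
proof -
  have xc: "x \<in> carrier G" using Ic x by simp
  show nI: "x \<otimes> x \<notin> I"
  proof
    assume xx: "x \<otimes> x \<in> I"
    have e1: "x \<otimes> x \<otimes> y0 = inv y0 \<otimes> (x \<otimes> x)" using R1[OF xx y0(1,2)] .
    have e2: "x \<otimes> y0 = inv y0 \<otimes> x" using R1[OF x y0(1,2)] .
    have e3: "x \<otimes> inv y0 = y0 \<otimes> x" using R1[OF x _ notI_inv[OF y0(1,2)]] y0 by simp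
    have "x \<otimes> x \<otimes> y0 = x \<otimes> (x \<otimes> y0)" using xc y0 by (simp add: m_assoc)
    also have "\<dots> = (x \<otimes> inv y0) \<otimes> x" using e2 xc y0 by (simp add: m_assoc)
    also have "\<dots> = y0 \<otimes> (x \<otimes> x)" using e3 xc y0 by (simp add: m_assoc)
    finally have "y0 \<otimes> (x \<otimes> x) = inv y0 \<otimes> (x \<otimes> x)" using e1 by simp
    then have "y0 = inv y0" using xc y0 by simp
    then show False using y0 inv_self_sq by (metis)
  qed
  have "h (x \<otimes> x) = x \<otimes> x" using hF nI xc by simp
  then have "inv (x \<otimes> x) = x \<otimes> x" using sqI[OF x] by simp
  then show "x \<otimes> x \<otimes> (x \<otimes> x) = \<one>" using inv_self_sq xc by simp
qed

end

end


context cpm begin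

lemma closure_pq:
  assumes y1: "y1 \<in> carrier G" "y1 \<notin> I" and y2: "y2 \<in> carrier G" "y2 \<notin> I"
    and wI: "y1 \<otimes> y2 \<in> I"
  shows "pq"
proof -
  define w where "w = y1 \<otimes> y2"
  have wc: "w \<in> carrier G" using y1 y2 by (simp add: w_def)
  have wI': "w \<in> I" using wI by (simp add: w_def)
  have M1: "y2 \<otimes> y1 = inv y1 \<otimes> y2"
  proof -
    have "y1 \<otimes> y2 \<otimes> y1 = inv y1 \<otimes> (y1 \<otimes> y2)" using R1[OF wI y1] .
    then have "y1 \<otimes> (y2 \<otimes> y1) = y2" using y1 y2 by (simp add: m_assoc)
    then show ?thesis using y1 y2 inv_solve_left[of "y2 \<otimes> y1" y1 y2] by simp
  qed
  have M2: "y1 \<otimes> y2 = inv y2 \<otimes> y1"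
  proof -
    have "y1 \<otimes> y2 \<otimes> y2 = inv y2 \<otimes> (y1 \<otimes> y2)" using R1[OF wI y2] .
    then have "(y1 \<otimes> y2) \<otimes> y2 = (inv y2 \<otimes> y1) \<otimes> y2" using y1 y2 by (simp add: m_assoc)
    then show ?thesis using y1 y2 by simp
  qed
  have sq12: "y1 \<otimes> y1 = y2 \<otimes> y2" using MI(1)[OF y1(1) y2(1) M1 M2] .
  have y1n: "y1 \<otimes> y1 \<noteq> \<one>"
  proof
    assume e: "y1 \<otimes> y1 = \<one>"
    then have e2: "y2 \<otimes> y2 = \<one>" using sq12 by simp
    have i1: "inv y1 = y1" using sq1_inv y1 e by simp
    have "w \<otimes> w = y1 \<otimes> ((y2 \<otimes> y1) \<otimes> y2)" using y1 y2 by (simp add: w_def m_assoc)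
    also have "\<dots> = y1 \<otimes> ((y1 \<otimes> y2) \<otimes> y2)" using M1 i1 by simp
    also have "\<dots> = \<one>" using y1 y2 e e2 by (simp add: m_assoc[symmetric])
    finally have "w \<notin> I" using sq1_notI wc by simp
    then show False using wI' by simp
  qed
  note y1F = y1 y1n
  have w4: "w \<otimes> w \<otimes> (w \<otimes> w) = \<one>" using B1(2)[OF y1F wI'] .
  have Rw: "\<And>y. y \<in> carrier G \<Longrightarrow> y \<notin> I \<Longrightarrow> w \<otimes> y = inv y \<otimes> w" using R1[OF wI'] by blast
  have Rw': "\<And>y. y \<in> carrier G \<Longrightarrow> y \<notin> I \<Longrightarrow> w \<otimes> inv y = y \<otimes> w"
    using R1[OF wI'] notI_inv by (metis inv_closed inv_inv)
  have winv: "\<And>y. y \<in> carrier G \<Longrightarrow> y \<notin> I \<Longrightarrow> inv w \<otimes> inv y = y \<otimes> inv w"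
  proof -
    fix y assume y: "y \<in> carrier G" "y \<notin> I"
    have "inv (w \<otimes> inv y) = inv (y \<otimes> w)" using Rw'[OF y] by simp
    then show "inv w \<otimes> inv y = y \<otimes> inv w" using y wc by (simp add: inv_mult_group)
  qed
  have wwc: "\<And>y. y \<in> carrier G \<Longrightarrow> y \<notin> I \<Longrightarrow> w \<otimes> w \<otimes> y = y \<otimes> (w \<otimes> w)"
  proof -
    fix y assume y: "y \<in> carrier G" "y \<notin> I"
    have "w \<otimes> w \<otimes> y = w \<otimes> (w \<otimes> y)" using y wc by (simp add: m_assoc)
    also have "\<dots> = (w \<otimes> inv y) \<otimes> w" using Rw[OF y] y wc by (simp add: m_assoc)
    also have "\<dots> = y \<otimes> (w \<otimes> w)" using Rw'[OF y] y wc by (simp add: m_assoc)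
    finally show "w \<otimes> w \<otimes> y = y \<otimes> (w \<otimes> w)" .
  qed
  have cw: "\<And>x. x \<in> I \<Longrightarrow> (inv w \<otimes> x) \<otimes> (inv w \<otimes> x) = \<one> \<and> x \<otimes> x = w \<otimes> w"
  proof -
    fix x assume x: "x \<in> I"
    have xc: "x \<in> carrier G" using Ic x by simp
    define c where "c = inv w \<otimes> x"
    have cc: "c \<in> carrier G" using xc wc by (simp add: c_def)
    have ccom: "\<And>y. y \<in> carrier G \<Longrightarrow> y \<notin> I \<Longrightarrow> c \<otimes> y = y \<otimes> c"
    proof -
      fix y assume y: "y \<in> carrier G" "y \<notin> I"
      have "c \<otimes> y = inv w \<otimes> (x \<otimes> y)" using xc wc y by (simp add: c_def m_assoc)
      also have "\<dots> = (inv w \<otimes> inv y) \<otimes> x" using R1[OF x y] xc wc y by (simp add: m_assoc)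
      also have "\<dots> = y \<otimes> c" using winv[OF y] xc wc y by (simp add: c_def m_assoc)
      finally show "c \<otimes> y = y \<otimes> c" .
    qed
    have cwc: "c \<otimes> w = w \<otimes> c"
    proof -
      have "c \<otimes> w = (c \<otimes> y1) \<otimes> y2" using cc y1 y2 by (simp add: w_def m_assoc)
      also have "\<dots> = y1 \<otimes> (c \<otimes> y2)" using ccom[OF y1] cc y1 y2 by (simp add: m_assoc)
      also have "\<dots> = w \<otimes> c" using ccom[OF y2] cc y1 y2 by (simp add: w_def m_assoc)
      finally show ?thesis .
    qed
    define u where "u = w \<otimes> w \<otimes> c"
    have uc: "u \<in> carrier G" using wc cc by (simp add: u_def)
    have uy1: "u \<otimes> y1 = y1 \<otimes> u"
    proof -
      have "u \<otimes> y1 = w \<otimes> w \<otimes> (c \<otimes> y1)" using wc cc y1 by (simp add: u_def m_assoc)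
      also have "\<dots> = (w \<otimes> w \<otimes> y1) \<otimes> c" using ccom[OF y1] wc cc y1 by (simp add: m_assoc)
      also have "\<dots> = y1 \<otimes> u" using wwc[OF y1] wc cc y1 by (simp add: u_def m_assoc)
      finally show ?thesis .
    qed
    have uI: "u \<notin> I" using B0[OF y1F _ y1F] uy1 by metis
    have uw: "u \<otimes> w = w \<otimes> u" using cwc wc cc by (simp add: u_def m_assoc)
    have "w \<otimes> u = inv u \<otimes> w" using Rw[OF uc uI] .
    then have "u \<otimes> w = inv u \<otimes> w" using uw by simp
    then have "u = inv u" using uc wc by simp
    then have uu: "u \<otimes> u = \<one>" using inv_self_sq uc by simp
    have "u \<otimes> u = (w \<otimes> w \<otimes> (w \<otimes> w)) \<otimes> (c \<otimes> c)"
    proof -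
      have "u \<otimes> u = w \<otimes> w \<otimes> ((c \<otimes> w) \<otimes> (w \<otimes> c))" using wc cc by (simp add: u_def m_assoc)
      also have "\<dots> = w \<otimes> w \<otimes> ((w \<otimes> c) \<otimes> (w \<otimes> c))" using cwc by simp
      also have "\<dots> = w \<otimes> w \<otimes> (w \<otimes> ((c \<otimes> w) \<otimes> c))" using wc cc by (simp add: m_assoc)
      also have "\<dots> = w \<otimes> w \<otimes> (w \<otimes> ((w \<otimes> c) \<otimes> c))" using cwc by simp
      also have "\<dots> = (w \<otimes> w \<otimes> (w \<otimes> w)) \<otimes> (c \<otimes> c)" using wc cc by (simp add: m_assoc)
      finally show ?thesis .
    qed
    then have ccsq: "c \<otimes> c = \<one>" using uu w4 cc by simp
    have xe: "x = w \<otimes> c" using xc wc by (simp add: c_def)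
    have "x \<otimes> x = w \<otimes> ((c \<otimes> w) \<otimes> c)" using xe wc cc by (simp add: m_assoc)
    also have "\<dots> = w \<otimes> w \<otimes> (c \<otimes> c)" using cwc wc cc by (simp add: m_assoc)
    also have "\<dots> = w \<otimes> w" using ccsq wc by simp
    finally show "(inv w \<otimes> x) \<otimes> (inv w \<otimes> x) = \<one> \<and> x \<otimes> x = w \<otimes> w" using ccsq by (simp add: c_def)
  qed
  define z where "z = w \<otimes> w"
  have zc: "z \<in> carrier G" using wc by (simp add: z_def)
  have zz: "z \<otimes> z = \<one>" using w4 by (simp add: z_def)
  have zinv: "inv z = z" using sq1_inv zc zz by simp
  have Isq: "\<And>x. x \<in> I \<Longrightarrow> x \<otimes> x = z" using cw by (simp add: z_def)
  have Fsq: "\<And>y. y \<in> carrier G \<Longrightarrow> y \<notin> I \<Longrightarrow> y \<otimes> y \<noteq> \<one> \<Longrightarrow> y \<otimes> y = z"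
  proof -
    fix y assume y: "y \<in> carrier G" "y \<notin> I" "y \<otimes> y \<noteq> \<one>"
    have wyI: "w \<otimes> y \<notin> I"
    proof
      assume "w \<otimes> y \<in> I"
      then have "(inv w \<otimes> (w \<otimes> y)) \<otimes> (inv w \<otimes> (w \<otimes> y)) = \<one>" using cw by blast
      then show False using y wc by simp
    qed
    have "w \<otimes> (w \<otimes> y) = inv (w \<otimes> y) \<otimes> w" using Rw[OF _ wyI] wc y by simp
    then have "z \<otimes> y = inv y" using wc y by (simp add: z_def m_assoc inv_mult_group)
    then have "z \<otimes> (z \<otimes> y) = z \<otimes> inv y" by simp
    then have "y = z \<otimes> inv y" using zz zc y by (simp add: m_assoc[symmetric])
    then have "y \<otimes> y = z \<otimes> inv y \<otimes> y" by simp
    then show "y \<otimes> y = z" using zc y by (simp add: m_assoc)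
  qed
  have zcent: "\<And>g. g \<in> carrier G \<Longrightarrow> g \<otimes> z = z \<otimes> g"
  proof -
    fix g assume g: "g \<in> carrier G"
    show "g \<otimes> z = z \<otimes> g"
    proof (cases "g \<in> I")
      case True
      then show ?thesis using Isq[OF True] g by (metis m_assoc)
    next
      case gF: False
      show ?thesis
      proof (cases "g \<otimes> g = \<one>")
        case False
        then show ?thesis using Fsq[OF g gF False] g by (metis m_assoc)
      next
        case True
        have "w \<otimes> g = g \<otimes> w" using Rw[OF g gF] sq1_inv[OF g True] by simp
        then show ?thesis using wwc[OF g gF] by (simp add: z_def)
      qed
    qed
  qed
  have FI: "\<And>a b. a \<in> carrier G \<Longrightarrow> a \<notin> I \<Longrightarrow> a \<otimes> a \<noteq> \<one> \<Longrightarrow> b \<in> I \<Longrightarrow> a \<otimes> b = inv b \<otimes> a"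
  proof -
    fix a b assume a: "a \<in> carrier G" "a \<notin> I" "a \<otimes> a \<noteq> \<one>" and b: "b \<in> I"
    have bc: "b \<in> carrier G" using Ic b by simp
    have aa: "a \<otimes> a = z" using Fsq a by simp
    have bb: "b \<otimes> b = z" using Isq b by simp
    have ia: "inv a = z \<otimes> a" using aa zz a zc by (metis inv_equality m_assoc m_closed)
    have ib: "inv b = z \<otimes> b" using bb zz bc zc by (metis inv_equality m_assoc m_closed)
    have "b \<otimes> a = z \<otimes> (a \<otimes> b)" using R1[OF b a(1,2)] ia a bc zc by (simp add: m_assoc)
    then have "z \<otimes> (b \<otimes> a) = a \<otimes> b" using zz zc a bc by (simp add: m_assoc[symmetric])
    then show "a \<otimes> b = inv b \<otimes> a" using ib zc a bc by (simp add: m_assoc)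
  qed
  show "pq" unfolding pq_def
  proof (intro ballI)
    fix a b assume a: "a \<in> carrier G" and b: "b \<in> carrier G"
    show "a \<otimes> b = b \<otimes> a \<or> a \<otimes> b = inv b \<otimes> a"
    proof (cases "a \<in> I")
      case aI: True
      show ?thesis
      proof (cases "b \<in> I")
        case False then show ?thesis using R1[OF aI b] by simp
      next
        case bI: True
        show ?thesis
        proof (cases "a \<otimes> b \<in> I")
          case True
          have "a \<otimes> (a \<otimes> b) = a \<otimes> b \<otimes> a \<or> a \<otimes> a = a \<otimes> b \<otimes> (a \<otimes> b)" using R2[OF aI True] .
          then show ?thesis
          proof
            assume "a \<otimes> (a \<otimes> b) = a \<otimes> b \<otimes> a"
            then have "a \<otimes> b = b \<otimes> a" using a b by (simp add: m_assoc)
            then show ?thesis by simp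
          next
            assume "a \<otimes> a = a \<otimes> b \<otimes> (a \<otimes> b)"
            then have "a = b \<otimes> (a \<otimes> b)" using a b by (simp add: m_assoc)
            then have "inv b \<otimes> a = a \<otimes> b" using a b inv_solve_left'[of "a \<otimes> b" b a] by simp
            then show ?thesis by simp
          qed
        next
          case abF: False
          have abc: "a \<otimes> b \<in> carrier G" using a b by simp
          show ?thesis
          proof (cases "a \<otimes> b \<otimes> (a \<otimes> b) = \<one>")
            case True
            have "a \<otimes> (a \<otimes> b) = inv (a \<otimes> b) \<otimes> a" using R1[OF aI abc abF] .
            also have "inv (a \<otimes> b) = a \<otimes> b" using sq1_inv[OF abc True] .
            finally have "a \<otimes> (a \<otimes> b) = a \<otimes> (b \<otimes> a)" using a b by (simp add: m_assoc)
            then show ?thesis using a b by simp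
          next
            case False
            have "a \<otimes> b \<otimes> b = inv b \<otimes> (a \<otimes> b)" using FI[OF abc abF False bI] .
            then have "(a \<otimes> b) \<otimes> b = (inv b \<otimes> a) \<otimes> b" using a b by (simp add: m_assoc)
            then show ?thesis using a b by simp
          qed
        qed
      qed
    next
      case aF: False
      show ?thesis
      proof (cases "b \<in> I")
        case bI: True
        show ?thesis
        proof (cases "a \<otimes> a = \<one>")
          case True
          have "b \<otimes> a = inv a \<otimes> b" using R1[OF bI a aF] .
          then show ?thesis using sq1_inv[OF a True] by simp
        next
          case False
          then show ?thesis using FI[OF a aF False bI] by simp
        qed
      next
        case bF: False
        have abc: "a \<otimes> b \<in> carrier G" using a b by simp
        show ?thesis
        proof (cases "a \<otimes> b \<in> I")
          case True
          have "a \<otimes> b \<otimes> b = inv b \<otimes> (a \<otimes> b)" using R1[OF True b bF] .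
          then have "(a \<otimes> b) \<otimes> b = (inv b \<otimes> a) \<otimes> b" using a b by (simp add: m_assoc)
          then show ?thesis using a b by simp
        next
          case False
          have e1: "w \<otimes> (a \<otimes> b) = inv (a \<otimes> b) \<otimes> w" using Rw[OF abc False] .
          have "w \<otimes> (a \<otimes> b) = (w \<otimes> a) \<otimes> b" using wc a b by (simp add: m_assoc)
          also have "\<dots> = inv a \<otimes> (w \<otimes> b)" using Rw[OF a aF] wc a b by (simp add: m_assoc)
          also have "\<dots> = (inv a \<otimes> inv b) \<otimes> w" using Rw[OF b bF] wc a b by (simp add: m_assoc)
          finally have "inv (a \<otimes> b) \<otimes> w = (inv a \<otimes> inv b) \<otimes> w" using e1 by simp
          then have "inv (a \<otimes> b) = inv a \<otimes> inv b" using wc a b by simp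
          then have "inv (a \<otimes> b) = inv (b \<otimes> a)" using a b by (simp add: inv_mult_group)
          then have "a \<otimes> b = b \<otimes> a" using inv_eq_imp a b by simp
          then show ?thesis by simp
        qed
      qed
    qed
  qed
qed

end


context cpm begin

theorem classify:
  assumes npq: "\<not> pq"
  shows "(\<forall>x\<in>carrier G. h x = x) \<or> (\<exists>A z. dic A z \<and> (\<forall>x\<in>carrier G. h x = (if x \<in> A then x else inv x)))"
proof (cases "I = {}")
  case True
  then show ?thesis using hF by blast
next
  case False
  then obtain x1 where x1: "x1 \<in> I" by blast
  have x1c: "x1 \<in> carrier G" using Ic x1 by simp
  obtain y0 where y0: "y0 \<in> carrier G" "y0 \<notin> I" "y0 \<otimes> y0 \<noteq> \<one>"
    using caseA npq by blast
  have clos: "\<And>a b. a \<in> carrier G \<Longrightarrow> a \<notin> I \<Longrightarrow> b \<in> carrier G \<Longrightarrow> b \<notin> I \<Longrightarrow> a \<otimes> b \<notin> I"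
    using closure_pq npq by blast
  define A where "A = carrier G - I"
  define z where "z = x1 \<otimes> x1"
  have IA: "\<And>x. x \<in> carrier G \<Longrightarrow> x \<notin> A \<longleftrightarrow> x \<in> I" by (simp add: A_def)
  have sgA: "subgroup A G"
  proof (rule subgroupI)
    show "A \<subseteq> carrier G" by (auto simp: A_def)
    show "A \<noteq> {}" using one_notI by (auto simp: A_def)
    show "\<And>a. a \<in> A \<Longrightarrow> inv a \<in> A" using notI_inv by (auto simp: A_def)
    show "\<And>a b. a \<in> A \<Longrightarrow> b \<in> A \<Longrightarrow> a \<otimes> b \<in> A" using clos by (auto simp: A_def)
  qed
  have II: "\<And>x y. x \<in> I \<Longrightarrow> y \<in> I \<Longrightarrow> x \<otimes> y \<notin> I"
  proof
    fix x y assume x: "x \<in> I" and y: "y \<in> I" and xy: "x \<otimes> y \<in> I"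
    have xc: "x \<in> carrier G" and yc: "y \<in> carrier G" using Ic x y by auto
    have "x \<otimes> y \<otimes> y0 = x \<otimes> (y \<otimes> y0)" using xc yc y0 by (simp add: m_assoc)
    also have "\<dots> = (x \<otimes> inv y0) \<otimes> y" using R1[OF y y0(1,2)] xc yc y0 by (simp add: m_assoc)
    also have "\<dots> = y0 \<otimes> (x \<otimes> y)" using R1[OF x _ notI_inv[OF y0(1,2)]] xc yc y0 by (simp add: m_assoc)
    finally show False using B0[OF y0 xy y0] by simp
  qed
  have zne: "z \<noteq> \<one>"
  proof
    assume "z = \<one>"
    then have "inv x1 = x1" using sq1_inv x1c by (simp add: z_def)
    then show False using hI x1 by simp
  qed
  have Isq: "\<And>x. x \<in> I \<Longrightarrow> x \<otimes> x = z"
  proof -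
    fix x assume x: "x \<in> I"
    have xc: "x \<in> carrier G" using Ic x by simp
    define f where "f = inv x1 \<otimes> x"
    have fc: "f \<in> carrier G" using xc x1c by (simp add: f_def)
    have fI: "f \<notin> I" using II[OF invI[OF x1] x] by (simp add: f_def)
    have xe: "x = x1 \<otimes> f" using xc x1c by (simp add: f_def)
    have e: "x1 \<otimes> inv f = f \<otimes> x1" using R1[OF x1 _ notI_inv[OF fc fI]] fc by simp
    have e2: "(f \<otimes> x1) \<otimes> f = x1"
    proof -
      have "(f \<otimes> x1) \<otimes> f = (x1 \<otimes> inv f) \<otimes> f" using e by simp
      also have "\<dots> = x1" using fc x1c by (simp add: m_assoc)
      finally show ?thesis .
    qed
    have "x \<otimes> x = x1 \<otimes> ((f \<otimes> x1) \<otimes> f)" using xe fc x1c by (simp add: m_assoc)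
    also have "\<dots> = x1 \<otimes> x1" using e2 by simp
    finally show "x \<otimes> x = z" by (simp add: z_def)
  qed
  have "dic A z"
    unfolding dic_def
  proof (intro conjI ballI)
    show "subgroup A G" by (rule sgA)
    show "z \<noteq> \<one>" by (rule zne)
    show "\<exists>x\<in>carrier G. x \<notin> A" using x1 x1c by (auto simp: A_def)
    fix x assume x: "x \<in> carrier G - A"
    then have xI: "x \<in> I" by (simp add: A_def)
    show "x \<otimes> x = z" using Isq xI .
    { fix y assume y: "y \<in> carrier G - A"
      then have yI: "y \<in> I" by (simp add: A_def)
      show "x \<otimes> y \<in> A" using II[OF xI yI] Ic xI yI by (simp add: A_def) }
    { fix a assume a: "a \<in> A"
      show "x \<otimes> a = inv a \<otimes> x" using R1[OF xI] a by (simp add: A_def) }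
  qed
  moreover have "\<forall>x\<in>carrier G. h x = (if x \<in> A then x else inv x)"
    using hI hF by (auto simp: A_def)
  ultimately show ?thesis by blast
qed

end

context group begin

lemma sg_inv: "subgroup A G \<Longrightarrow> x \<in> A \<Longrightarrow> inv x \<in> A"
  by (rule subgroup.m_inv_closed)
lemma sg_mul: "subgroup A G \<Longrightarrow> x \<in> A \<Longrightarrow> y \<in> A \<Longrightarrow> x \<otimes> y \<in> A"
  by (rule subgroup.m_closed)
lemma sg_notinv: assumes "subgroup A G" "x \<in> carrier G" "x \<notin> A" shows "inv x \<notin> A"
proof
  assume "inv x \<in> A"
  then have "inv (inv x) \<in> A" using sg_inv assms(1) by blast
  then show False using assms by simp
qed

lemma abelian_pq: "(\<forall>a\<in>carrier G. \<forall>b\<in>carrier G. a \<otimes> b = b \<otimes> a) \<Longrightarrow> pq"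
  unfolding pq_def by blast

lemma abelian_cp:
  assumes ab: "\<forall>a\<in>carrier G. \<forall>b\<in>carrier G. a \<otimes> b = b \<otimes> a" and cp: "cpg h"
  shows "(\<forall>x\<in>carrier G. h x = x) \<or> (\<forall>x\<in>carrier G. h x = inv x)"
proof -
  interpret cpm G h using cp by unfold_locales
  show ?thesis
  proof (cases "I = {}")
    case True then show ?thesis using hF by blast
  next
    case False
    then obtain x where x: "x \<in> I" by blast
    have "\<forall>y\<in>carrier G. y \<notin> I \<longrightarrow> inv y = y"
    proof (intro ballI impI)
      fix y assume y: "y \<in> carrier G" "y \<notin> I"
      have "x \<otimes> y = inv y \<otimes> x" using R1[OF x y] .
      moreover have "x \<otimes> y = y \<otimes> x" using ab y Ic[OF x] by blast
      ultimately have "y \<otimes> x = inv y \<otimes> x" by simp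
      then show "inv y = y" using y Ic[OF x] by simp
    qed
    then have "\<forall>x\<in>carrier G. h x = inv x"
    proof (intro ballI)
      fix g assume g: "g \<in> carrier G" "\<forall>y\<in>carrier G. y \<notin> I \<longrightarrow> inv y = y"
      show "h g = inv g"
      proof (cases "g \<in> I")
        case True then show ?thesis using hI by simp
      next
        case False then show ?thesis using hF g by simp
      qed
    qed
    then show ?thesis by blast
  qed
qed

lemma dic_facts:
  assumes d: "dic A z"
  shows "A \<subseteq> carrier G" "z \<in> A" "z \<in> carrier G" "z \<otimes> z = \<one>"
    "\<And>g. g \<in> carrier G \<Longrightarrow> g \<otimes> z = z \<otimes> g"
    "\<And>a b. a \<in> A \<Longrightarrow> b \<in> A \<Longrightarrow> a \<otimes> b = b \<otimes> a"
    "\<And>x. x \<in> carrier G \<Longrightarrow> x \<notin> A \<Longrightarrow> inv x = z \<otimes> x"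
    "\<And>x. x \<in> carrier G \<Longrightarrow> x \<notin> A \<Longrightarrow> x \<otimes> x = z"
    "\<And>x a. x \<in> carrier G \<Longrightarrow> x \<notin> A \<Longrightarrow> a \<in> A \<Longrightarrow> x \<otimes> a = inv a \<otimes> x"
    "\<And>x y. x \<in> carrier G \<Longrightarrow> x \<notin> A \<Longrightarrow> y \<in> carrier G \<Longrightarrow> y \<notin> A \<Longrightarrow> x \<otimes> y \<in> A"
    "z \<noteq> \<one>" "\<exists>x\<in>carrier G. x \<notin> A" "subgroup A G"
proof -
  have sg: "subgroup A G" and zn: "z \<noteq> \<one>" and ex: "\<exists>x\<in>carrier G. x \<notin> A"
    and cl: "\<And>x y. x \<in> carrier G \<Longrightarrow> x \<notin> A \<Longrightarrow> y \<in> carrier G \<Longrightarrow> y \<notin> A \<Longrightarrow> x \<otimes> y \<in> A"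
    and sq: "\<And>x. x \<in> carrier G \<Longrightarrow> x \<notin> A \<Longrightarrow> x \<otimes> x = z"
    and iv: "\<And>x a. x \<in> carrier G \<Longrightarrow> x \<notin> A \<Longrightarrow> a \<in> A \<Longrightarrow> x \<otimes> a = inv a \<otimes> x"
    using d unfolding dic_def by auto
  show "subgroup A G" "z \<noteq> \<one>" "\<exists>x\<in>carrier G. x \<notin> A" by (fact sg zn ex)+
  show Ac: "A \<subseteq> carrier G" using subgroup.subset[OF sg] .
  show "\<And>x y. x \<in> carrier G \<Longrightarrow> x \<notin> A \<Longrightarrow> y \<in> carrier G \<Longrightarrow> y \<notin> A \<Longrightarrow> x \<otimes> y \<in> A" by (fact cl)
  show "\<And>x. x \<in> carrier G \<Longrightarrow> x \<notin> A \<Longrightarrow> x \<otimes> x = z" by (fact sq)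
  show "\<And>x a. x \<in> carrier G \<Longrightarrow> x \<notin> A \<Longrightarrow> a \<in> A \<Longrightarrow> x \<otimes> a = inv a \<otimes> x" by (fact iv)
  obtain x0 where x0: "x0 \<in> carrier G" "x0 \<notin> A" using ex by blast
  have zA: "z \<in> A" using cl[OF x0 x0] sq[OF x0] by simp
  show "z \<in> A" by (fact zA)
  have zc: "z \<in> carrier G" using zA Ac by auto
  show "z \<in> carrier G" by (fact zc)
  have zz: "z \<otimes> z = \<one>"
  proof -
    have "x0 \<otimes> z = inv z \<otimes> x0" using iv[OF x0 zA] .
    moreover have "x0 \<otimes> z = z \<otimes> x0"
    proof -
      have "x0 \<otimes> (x0 \<otimes> x0) = (x0 \<otimes> x0) \<otimes> x0" using x0 by (simp add: m_assoc)
      then show ?thesis using sq[OF x0] by simp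
    qed
    ultimately have "inv z = z" using zc x0 by simp
    then show ?thesis using inv_self_sq zc by simp
  qed
  show "z \<otimes> z = \<one>" by (fact zz)
  show "\<And>g. g \<in> carrier G \<Longrightarrow> g \<otimes> z = z \<otimes> g"
  proof -
    fix g assume g: "g \<in> carrier G"
    show "g \<otimes> z = z \<otimes> g"
    proof (cases "g \<in> A")
      case False
      have "g \<otimes> (g \<otimes> g) = (g \<otimes> g) \<otimes> g" using g by (simp add: m_assoc)
      then show ?thesis using sq[OF g False] by simp
    next
      case True
      have ig: "inv g \<in> A" using sg_inv[OF sg True] .
      have e1: "x0 \<otimes> g = inv g \<otimes> x0" using iv[OF x0 True] .
      have e2: "x0 \<otimes> inv g = g \<otimes> x0" using iv[OF x0 ig] g by simp
      have "z \<otimes> g = x0 \<otimes> (x0 \<otimes> g)" using sq[OF x0, symmetric] x0 g by (simp add: m_assoc)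
      also have "\<dots> = (x0 \<otimes> inv g) \<otimes> x0" using e1 x0 g by (simp add: m_assoc)
      also have "\<dots> = g \<otimes> z" using e2 sq[OF x0] x0 g by (simp add: m_assoc)
      finally show ?thesis by simp
    qed
  qed
  show "\<And>a b. a \<in> A \<Longrightarrow> b \<in> A \<Longrightarrow> a \<otimes> b = b \<otimes> a"
  proof -
    fix a b assume a: "a \<in> A" and b: "b \<in> A"
    have ac: "a \<in> carrier G" and bc: "b \<in> carrier G" using a b Ac by auto
    have ab: "a \<otimes> b \<in> A" using sg_mul[OF sg a b] .
    have "x0 \<otimes> (a \<otimes> b) = inv (a \<otimes> b) \<otimes> x0" using iv[OF x0 ab] .
    moreover have "x0 \<otimes> (a \<otimes> b) = (inv a \<otimes> inv b) \<otimes> x0"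
    proof -
      have "x0 \<otimes> (a \<otimes> b) = (x0 \<otimes> a) \<otimes> b" using x0 ac bc by (simp add: m_assoc)
      also have "\<dots> = inv a \<otimes> (x0 \<otimes> b)" using iv[OF x0 a] x0 ac bc by (simp add: m_assoc)
      also have "\<dots> = (inv a \<otimes> inv b) \<otimes> x0" using iv[OF x0 b] x0 ac bc by (simp add: m_assoc)
      finally show ?thesis .
    qed
    ultimately have "inv (a \<otimes> b) = inv a \<otimes> inv b" using x0 ac bc by simp
    then have "inv (a \<otimes> b) = inv (b \<otimes> a)" using ac bc by (simp add: inv_mult_group)
    then show "a \<otimes> b = b \<otimes> a" using inv_eq_imp ac bc by simp
  qed
  show "\<And>x. x \<in> carrier G \<Longrightarrow> x \<notin> A \<Longrightarrow> inv x = z \<otimes> x"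
  proof -
    fix x assume x: "x \<in> carrier G" "x \<notin> A"
    have "(z \<otimes> x) \<otimes> x = \<one>" using sq[OF x] zz zc x by (simp add: m_assoc)
    then show "inv x = z \<otimes> x" using inv_equality zc x by simp
  qed
qed

definition tau :: "'a set \<Rightarrow> 'a \<Rightarrow> 'a" where
  "tau A x = (if x \<in> A then x else inv x)"

lemma dic_notA_mult:
  assumes d: "dic A z" and a: "a \<in> A" and x: "x \<in> carrier G" "x \<notin> A"
  shows "a \<otimes> x \<notin> A" "x \<otimes> a \<notin> A"
proof -
  have sg: "subgroup A G" using dic_facts(13)[OF d] .
  have ac: "a \<in> carrier G" using a dic_facts(1)[OF d] by auto
  show "a \<otimes> x \<notin> A"
  proof
    assume "a \<otimes> x \<in> A"
    then have "inv a \<otimes> (a \<otimes> x) \<in> A" using sg_mul[OF sg sg_inv[OF sg a]] by blast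
    then show False using x ac by simp
  qed
  show "x \<otimes> a \<notin> A"
  proof
    assume "x \<otimes> a \<in> A"
    then have "(x \<otimes> a) \<otimes> inv a \<in> A" using sg_mul[OF sg _ sg_inv[OF sg a]] by blast
    then show False using x ac by (simp add: m_assoc)
  qed
qed

lemma tau_hom:
  assumes d: "dic A z" and x: "x \<in> carrier G" and y: "y \<in> carrier G"
  shows "tau A (x \<otimes> y) = tau A x \<otimes> tau A y"
proof -
  note f = dic_facts[OF d]
  have sg: "subgroup A G" using f(13) .
  show ?thesis
  proof (cases "x \<in> A")
    case xA: True
    show ?thesis
    proof (cases "y \<in> A")
      case True
      then show ?thesis using sg_mul[OF sg xA True] xA True by (simp add: tau_def)
    next
      case False
      have "x \<otimes> y \<notin> A" using dic_notA_mult(1)[OF d xA y False] .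
      moreover have "inv y \<otimes> inv x = x \<otimes> inv y"
      proof -
        have iy: "inv y \<notin> A" using sg_notinv[OF sg y False] .
        have ix: "inv x \<in> A" using sg_inv[OF sg xA] .
        show ?thesis using f(9)[OF _ iy ix] x y by simp
      qed
      ultimately show ?thesis using xA False x y by (simp add: tau_def inv_mult_group)
    qed
  next
    case xA: False
    show ?thesis
    proof (cases "y \<in> A")
      case True
      have "x \<otimes> y \<notin> A" using dic_notA_mult(2)[OF d True x xA] .
      moreover have "inv y \<otimes> inv x = inv x \<otimes> y"
      proof -
        have ix: "inv x \<notin> A" using sg_notinv[OF sg x xA] .
        have "inv x \<otimes> y = inv y \<otimes> inv x" using f(9)[OF _ ix True] x y by simp
        then show ?thesis by simp
      qed
      ultimately show ?thesis using xA True x y by (simp add: tau_def inv_mult_group)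
    next
      case False
      have xyA: "x \<otimes> y \<in> A" using f(10)[OF x xA y False] .
      have "inv x \<otimes> inv y = x \<otimes> y"
      proof -
        have "inv x \<otimes> inv y = z \<otimes> x \<otimes> (z \<otimes> y)" using f(7)[OF x xA] f(7)[OF y False] by simp
        also have "\<dots> = z \<otimes> (x \<otimes> z) \<otimes> y" using f(3) x y by (simp add: m_assoc)
        also have "\<dots> = z \<otimes> (z \<otimes> x) \<otimes> y" using f(5)[OF x] by simp
        also have "\<dots> = z \<otimes> z \<otimes> (x \<otimes> y)" using f(3) x y by (simp add: m_assoc)
        also have "\<dots> = x \<otimes> y" using f(4) x y by simp
        finally show ?thesis .
      qed
      then show ?thesis using xA False xyA by (simp add: tau_def)
    qed
  qed
qed

lemma tau_c: "dic A z \<Longrightarrow> x \<in> carrier G \<Longrightarrow> tau A x \<in> carrier G"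
  by (simp add: tau_def)

lemma tau_tau: assumes d: "dic A z" and x: "x \<in> carrier G" shows "tau A (tau A x) = x"
proof (cases "x \<in> A")
  case True then show ?thesis by (simp add: tau_def)
next
  case False
  have "inv x \<notin> A" using sg_notinv[OF dic_facts(13)[OF d] x False] .
  then show ?thesis using False x by (simp add: tau_def)
qed

lemma tau_A: assumes d: "dic A z" and x: "x \<in> carrier G" shows "tau A x \<in> A \<longleftrightarrow> x \<in> A"
proof (cases "x \<in> A")
  case True then show ?thesis by (simp add: tau_def)
next
  case False
  have "inv x \<notin> A" using sg_notinv[OF dic_facts(13)[OF d] x False] .
  then show ?thesis using False x by (simp add: tau_def)
qed

lemma tau_ne: assumes d: "dic A z" and x: "x \<in> carrier G" "x \<notin> A" shows "tau A x \<noteq> x"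
proof
  assume "tau A x = x"
  then have "inv x = x" using x by (simp add: tau_def)
  then have "x \<otimes> x = \<one>" using inv_self_sq x by simp
  then show False using dic_facts(8,11)[OF d] x by simp
qed

lemma dic_pq:
  assumes d: "dic A z" and sqA: "\<forall>a\<in>A. a \<otimes> a = \<one> \<or> a \<otimes> a = z"
  shows pq
  unfolding pq_def
proof (intro ballI)
  note f = dic_facts[OF d]
  fix a b assume a: "a \<in> carrier G" and b: "b \<in> carrier G"
  have zinv: "inv z = z" using f(3,4) sq1_inv by simp
  have Ainv: "\<And>c. c \<in> A \<Longrightarrow> c \<otimes> c = z \<Longrightarrow> inv c = z \<otimes> c"
  proof -
    fix c assume c: "c \<in> A" "c \<otimes> c = z"
    have cc: "c \<in> carrier G" using c f(1) by auto
    have "(z \<otimes> c) \<otimes> c = \<one>" using c f(3,4) cc by (simp add: m_assoc)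
    then show "inv c = z \<otimes> c" using inv_equality f(3) cc by simp
  qed
  show "a \<otimes> b = b \<otimes> a \<or> a \<otimes> b = inv b \<otimes> a"
  proof (cases "a \<in> A")
    case aA: True
    show ?thesis
    proof (cases "b \<in> A")
      case True then show ?thesis using f(6) aA by simp
    next
      case bA: False
      have e: "b \<otimes> a = inv a \<otimes> b" using f(9)[OF b bA aA] .
      show ?thesis
      proof (cases "a \<otimes> a = \<one>")
        case True
        then show ?thesis using e sq1_inv a by simp
      next
        case False
        then have aa: "a \<otimes> a = z" using sqA aA by blast
        have ia: "inv a = z \<otimes> a" using Ainv aA aa by simp
        have ib: "inv b = z \<otimes> b" using f(7)[OF b bA] .
        have "z \<otimes> (b \<otimes> a) = a \<otimes> b" using e ia f(3,4) a b by (simp add: m_assoc[symmetric])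
        then have "a \<otimes> b = inv b \<otimes> a" using ib f(3) a b by (simp add: m_assoc)
        then show ?thesis by simp
      qed
    qed
  next
    case aA: False
    show ?thesis
    proof (cases "b \<in> A")
      case True then show ?thesis using f(9)[OF a aA True] by simp
    next
      case bA: False
      define c where "c = inv a \<otimes> b"
      have iaA: "inv a \<notin> A" using sg_notinv[OF f(13) a aA] .
      have cA: "c \<in> A" using f(10)[OF _ iaA b bA] a by (simp add: c_def)
      have cc: "c \<in> carrier G" using a b by (simp add: c_def)
      have be: "b = a \<otimes> c" using a b by (simp add: c_def)
      have ac: "a \<otimes> c = inv c \<otimes> a" using f(9)[OF a aA cA] .
      have aa: "a \<otimes> a = z" using f(8)[OF a aA] .
      show ?thesis
      proof (cases "c \<otimes> c = \<one>")
        case True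
        have "inv c = c" using sq1_inv cc True by simp
        then have acc: "a \<otimes> c = c \<otimes> a" using ac by simp
        have "b \<otimes> a = a \<otimes> (c \<otimes> a)" using be a cc by (simp add: m_assoc)
        also have "\<dots> = a \<otimes> b" using acc be by simp
        finally have "b \<otimes> a = a \<otimes> b" .
        then show ?thesis by simp
      next
        case False
        then have ccz: "c \<otimes> c = z" using sqA cA by blast
        have ic: "inv c = z \<otimes> c" using Ainv cA ccz by simp
        have "a \<otimes> b = z \<otimes> c" using be aa a cc by (simp add: m_assoc[symmetric])
        moreover have "inv b \<otimes> a = inv c" using be a cc by (simp add: inv_mult_group m_assoc)
        ultimately show ?thesis using ic by simp
      qed
    qed
  qed
qed

lemma dic_uniq:
  assumes d: "dic A z" and d': "dic A' z'" and ne: "A \<noteq> A'"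
  shows pq
proof -
  note f = dic_facts[OF d] and f' = dic_facts[OF d']
  have ex: "\<And>A z A' z'. dic A z \<Longrightarrow> dic A' z' \<Longrightarrow> A \<noteq> A' \<Longrightarrow> \<exists>v\<in>A. v \<notin> A'"
  proof (rule ccontr)
    fix A z A' z' assume d: "dic A z" and d': "dic A' z'" and ne: "A \<noteq> A'" and n: "\<not> (\<exists>v\<in>A. v \<notin> A')"
    note f = dic_facts[OF d] and f' = dic_facts[OF d']
    have sub: "A \<subseteq> A'" using n by blast
    then obtain u where u: "u \<in> A'" "u \<notin> A" using ne by blast
    have uc: "u \<in> carrier G" using u f'(1) by auto
    obtain y where y: "y \<in> carrier G" "y \<notin> A'" using f'(12) by blast
    have yA: "y \<notin> A" using y sub by blast
    have "u \<otimes> y \<in> A" using f(10)[OF uc u(2) y(1) yA] .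
    then have "u \<otimes> y \<in> A'" using sub by blast
    then have "inv u \<otimes> (u \<otimes> y) \<in> A'" using sg_mul[OF f'(13) sg_inv[OF f'(13) u(1)]] by blast
    then show False using y uc by simp
  qed
  obtain v where v: "v \<in> A" "v \<notin> A'" using ex[OF d d' ne] by blast
  obtain u where u: "u \<in> A'" "u \<notin> A" using ex[OF d' d] ne by blast
  have uc: "u \<in> carrier G" and vc: "v \<in> carrier G" using u v f(1) f'(1) by auto
  have h1: "v \<otimes> u = inv u \<otimes> v" using f'(9)[OF vc v(2) u(1)] .
  have h2: "u \<otimes> v = inv v \<otimes> u" using f(9)[OF uc u(2) v(1)] .
  have "u \<otimes> u = v \<otimes> v" using MI(1)[OF uc vc h1 h2] .
  then have zz': "z = z'" using f(8)[OF uc u(2)] f'(8)[OF vc v(2)] by simp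
  have "\<forall>a\<in>A. a \<otimes> a = \<one> \<or> a \<otimes> a = z"
  proof
    fix a assume a: "a \<in> A"
    have ac: "a \<in> carrier G" using a f(1) by auto
    show "a \<otimes> a = \<one> \<or> a \<otimes> a = z"
    proof (cases "a \<in> A'")
      case False
      then show ?thesis using f'(8)[OF ac] zz' by simp
    next
      case True
      have "u \<otimes> a = a \<otimes> u" using f'(6)[OF u(1) True] .
      moreover have "u \<otimes> a = inv a \<otimes> u" using f(9)[OF uc u(2) a] .
      ultimately have "inv a = a" using ac uc by simp
      then show ?thesis using inv_self_sq ac by simp
    qed
  qed
  then show ?thesis using dic_pq[OF d] by simp
qed

end


locale fmap = group G for G (structure) +
  fixes F
  assumes bij: "bij_betw F (carrier G) (carrier G)"
    and F1: "F \<one> = \<one>"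
    and FC: "\<And>g s. g \<in> carrier G \<Longrightarrow> s \<in> carrier G \<Longrightarrow>
       inv (F g) \<otimes> F (g \<otimes> s) = F s \<or> inv (F g) \<otimes> F (g \<otimes> s) = inv (F s)"
begin

definition Fi where "Fi = inv_into (carrier G) F"
definition psi where "psi g Q = inv (F g) \<otimes> F (g \<otimes> Fi Q)"

lemma Fc [simp]: "x \<in> carrier G \<Longrightarrow> F x \<in> carrier G"
  using bij bij_betwE by blast
lemma Fi_c [simp]: "Q \<in> carrier G \<Longrightarrow> Fi Q \<in> carrier G"
  unfolding Fi_def using bij by (meson bij_betwE bij_betw_inv_into)
lemma F_Fi [simp]: "Q \<in> carrier G \<Longrightarrow> F (Fi Q) = Q"
  unfolding Fi_def using bij by (simp add: bij_betw_inv_into_right)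
lemma Fi_F [simp]: "x \<in> carrier G \<Longrightarrow> Fi (F x) = x"
  unfolding Fi_def using bij by (simp add: bij_betw_inv_into_left)
lemma Finj: "x \<in> carrier G \<Longrightarrow> y \<in> carrier G \<Longrightarrow> F x = F y \<Longrightarrow> x = y"
  by (metis Fi_F)

lemma psi_c [simp]: "g \<in> carrier G \<Longrightarrow> Q \<in> carrier G \<Longrightarrow> psi g Q \<in> carrier G"
  by (simp add: psi_def)

lemma Fmul: "g \<in> carrier G \<Longrightarrow> x \<in> carrier G \<Longrightarrow> F (g \<otimes> x) = F g \<otimes> psi g (F x)"
  by (simp add: psi_def)

lemma psi_one: "Q \<in> carrier G \<Longrightarrow> psi \<one> Q = Q"
  by (simp add: psi_def F1)

lemma psi_cpg: assumes g: "g \<in> carrier G" shows "cpg (psi g)"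
  unfolding cpg_def
proof (intro conjI ballI)
  fix Q assume Q: "Q \<in> carrier G"
  show "psi g Q = Q \<or> psi g Q = inv Q"
    using FC[OF g Fi_c[OF Q]] Q by (simp add: psi_def)
next
  fix A B assume A: "A \<in> carrier G" and B: "B \<in> carrier G"
  define a where "a = Fi A"
  define c where "c = Fi (A \<otimes> B)"
  define s where "s = inv a \<otimes> c"
  have ac: "a \<in> carrier G" and cc: "c \<in> carrier G" and sc: "s \<in> carrier G"
    using A B by (auto simp: a_def c_def s_def)
  have gce: "g \<otimes> c = (g \<otimes> a) \<otimes> s" using g ac cc by (simp add: s_def m_assoc)
  have "inv (psi g A) \<otimes> psi g (A \<otimes> B) = inv (F (g \<otimes> a)) \<otimes> F (g \<otimes> c)"
    using g A B by (simp add: psi_def a_def c_def inv_mult_group m_assoc)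
  also have "\<dots> = inv (F (g \<otimes> a)) \<otimes> F ((g \<otimes> a) \<otimes> s)" using gce by simp
  finally have e1: "inv (psi g A) \<otimes> psi g (A \<otimes> B) = inv (F (g \<otimes> a)) \<otimes> F ((g \<otimes> a) \<otimes> s)" .
  have h1: "inv (F (g \<otimes> a)) \<otimes> F ((g \<otimes> a) \<otimes> s) = F s \<or> inv (F (g \<otimes> a)) \<otimes> F ((g \<otimes> a) \<otimes> s) = inv (F s)"
    using FC[OF _ sc] g ac by simp
  have "a \<otimes> s = c" using ac cc by (simp add: s_def)
  then have "inv (F a) \<otimes> F (a \<otimes> s) = B" using A B by (simp add: a_def c_def)
  then have "B = F s \<or> B = inv (F s)" using FC[OF ac sc] by simp
  then have "F s = B \<or> F s = inv B" using sc B by auto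
  then show "inv (psi g A) \<otimes> psi g (A \<otimes> B) = B \<or> inv (psi g A) \<otimes> psi g (A \<otimes> B) = inv B"
    using e1 h1 B by auto
qed

lemma psi_cpm: "g \<in> carrier G \<Longrightarrow> cpm G (psi g)"
  using psi_cpg by (simp add: cpm_def cpm_axioms_def is_group)

lemma comp:
  assumes g: "g \<in> carrier G" and x: "x \<in> carrier G" and Y: "Y \<in> carrier G"
    and hom: "\<And>U V. U \<in> carrier G \<Longrightarrow> V \<in> carrier G \<Longrightarrow> psi g (U \<otimes> V) = psi g U \<otimes> psi g V"
  shows "psi (g \<otimes> x) Y = psi g (psi x Y)"
proof -
  define y where "y = Fi Y"
  have yc: "y \<in> carrier G" and Fy: "F y = Y" using Y by (auto simp: y_def)
  have "F ((g \<otimes> x) \<otimes> y) = F g \<otimes> psi g (F x) \<otimes> psi (g \<otimes> x) Y"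
    using Fmul[of "g \<otimes> x" y] Fmul[OF g x] g x yc Fy by simp
  moreover have "F ((g \<otimes> x) \<otimes> y) = F g \<otimes> psi g (F x) \<otimes> psi g (psi x Y)"
  proof -
    have "F ((g \<otimes> x) \<otimes> y) = F (g \<otimes> (x \<otimes> y))" using g x yc by (simp add: m_assoc)
    also have "\<dots> = F g \<otimes> psi g (F x \<otimes> psi x Y)" using Fmul[OF g] Fmul[OF x yc] Fy x yc by simp
    also have "\<dots> = F g \<otimes> psi g (F x) \<otimes> psi g (psi x Y)" using hom g x Y by (simp add: m_assoc)
    finally show ?thesis .
  qed
  ultimately show ?thesis using g x Y by simp
qed

end


context fmap begin

lemma psi_class:
  assumes npq: "\<not> pq" and g: "g \<in> carrier G"
  shows "(\<forall>Y\<in>carrier G. psi g Y = Y) \<or> (\<exists>A z. dic A z \<and> (\<forall>Y\<in>carrier G. psi g Y = tau A Y))"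
proof -
  interpret c: cpm G "psi g" using psi_cpm[OF g] .
  show ?thesis using c.classify[OF npq] by (simp add: tau_def)
qed

lemma index2: assumes d: "dic A z" and P: "P \<in> carrier G" and Q: "Q \<in> carrier G"
  shows "P \<otimes> Q \<in> A \<longleftrightarrow> (P \<in> A \<longleftrightarrow> Q \<in> A)"
proof -
  note f = dic_facts[OF d]
  show ?thesis
  proof (cases "P \<in> A")
    case True
    show ?thesis
    proof (cases "Q \<in> A")
      case True then show ?thesis using \<open>P \<in> A\<close> sg_mul[OF f(13)] by simp
    next
      case False then show ?thesis using \<open>P \<in> A\<close> dic_notA_mult(1)[OF d _ Q] by simp
    qed
  next
    case False
    show ?thesis
    proof (cases "Q \<in> A")
      case True then show ?thesis using False dic_notA_mult(2)[OF d True P] by simp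
    next
      case False then show ?thesis using \<open>P \<notin> A\<close> f(10)[OF P _ Q] by simp
    qed
  qed
qed

theorem npq_id:
  assumes npq: "\<not> pq"
  shows "\<forall>g\<in>carrier G. \<forall>Y\<in>carrier G. psi g Y = Y"
proof (rule ccontr)
  assume "\<not> (\<forall>g\<in>carrier G. \<forall>Y\<in>carrier G. psi g Y = Y)"
  then obtain g0 where g0: "g0 \<in> carrier G" and ng0: "\<not> (\<forall>Y\<in>carrier G. psi g0 Y = Y)" by blast
  obtain A z where d: "dic A z" and pg0: "\<forall>Y\<in>carrier G. psi g0 Y = tau A Y"
    using psi_class[OF npq g0] ng0 by blast
  note f = dic_facts[OF d]
  have sg: "subgroup A G" using f(13) .
  have Ac: "A \<subseteq> carrier G" using f(1) .
  have alt: "\<And>g. g \<in> carrier G \<Longrightarrow> (\<forall>Y\<in>carrier G. psi g Y = Y) \<or> (\<forall>Y\<in>carrier G. psi g Y = tau A Y)"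
  proof -
    fix g assume g: "g \<in> carrier G"
    show "(\<forall>Y\<in>carrier G. psi g Y = Y) \<or> (\<forall>Y\<in>carrier G. psi g Y = tau A Y)"
    proof (cases "\<forall>Y\<in>carrier G. psi g Y = Y")
      case True then show ?thesis by simp
    next
      case False
      then obtain A' z' where d': "dic A' z'" and pg: "\<forall>Y\<in>carrier G. psi g Y = tau A' Y"
        using psi_class[OF npq g] by blast
      have "A' = A" using dic_uniq[OF d d'] npq by blast
      then show ?thesis using pg by simp
    qed
  qed
  have phom: "\<And>g U V. g \<in> carrier G \<Longrightarrow> U \<in> carrier G \<Longrightarrow> V \<in> carrier G \<Longrightarrow> psi g (U \<otimes> V) = psi g U \<otimes> psi g V"
  proof -
    fix g U V assume g: "g \<in> carrier G" and U: "U \<in> carrier G" and V: "V \<in> carrier G"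
    from alt[OF g] show "psi g (U \<otimes> V) = psi g U \<otimes> psi g V"
    proof
      assume "\<forall>Y\<in>carrier G. psi g Y = Y" then show ?thesis using U V by simp
    next
      assume "\<forall>Y\<in>carrier G. psi g Y = tau A Y" then show ?thesis using U V tau_hom[OF d] by simp
    qed
  qed
  define K where "K = {g \<in> carrier G. \<forall>Y\<in>carrier G. psi g Y = Y}"
  have nK: "\<And>g Y. g \<in> carrier G \<Longrightarrow> g \<notin> K \<Longrightarrow> Y \<in> carrier G \<Longrightarrow> psi g Y = tau A Y"
    using alt unfolding K_def by blast
  have yK: "\<And>g Y. g \<in> K \<Longrightarrow> Y \<in> carrier G \<Longrightarrow> psi g Y = Y"
    unfolding K_def by blast
  obtain y1 where y1: "y1 \<in> carrier G" "y1 \<notin> A" using f(12) by blast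
  have tne: "tau A y1 \<noteq> y1" using tau_ne[OF d y1] .
  have g0K: "g0 \<notin> K" using ng0 by (simp add: K_def)
  have Kx: "\<And>g x. g \<in> carrier G \<Longrightarrow> x \<in> carrier G \<Longrightarrow> (g \<otimes> x \<in> K) \<longleftrightarrow> (g \<in> K \<longleftrightarrow> x \<in> K)"
  proof -
    fix g x assume g: "g \<in> carrier G" and x: "x \<in> carrier G"
    have c: "\<And>Y. Y \<in> carrier G \<Longrightarrow> psi (g \<otimes> x) Y = psi g (psi x Y)" using comp[OF g x _ phom[OF g]] by blast
    show "(g \<otimes> x \<in> K) \<longleftrightarrow> (g \<in> K \<longleftrightarrow> x \<in> K)"
    proof (cases "g \<in> K")
      case gK: True
      show ?thesis
      proof (cases "x \<in> K")
        case True
        have "\<forall>Y\<in>carrier G. psi (g \<otimes> x) Y = Y" using c yK[OF gK] yK[OF True] x by simp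
        then have "g \<otimes> x \<in> K" unfolding K_def using g x by simp
        then show ?thesis using gK True by simp
      next
        case False
        have "psi (g \<otimes> x) y1 \<noteq> y1" using c[OF y1(1)] yK[OF gK] nK[OF x False] y1 tne tau_c[OF d y1(1)] by simp
        then have "g \<otimes> x \<notin> K" unfolding K_def using y1 by blast
        then show ?thesis using gK False by simp
      qed
    next
      case gK: False
      show ?thesis
      proof (cases "x \<in> K")
        case True
        have "psi (g \<otimes> x) y1 \<noteq> y1" using c[OF y1(1)] yK[OF True] nK[OF g gK] y1 tne by simp
        then have "g \<otimes> x \<notin> K" unfolding K_def using y1 by blast
        then show ?thesis using gK True by simp
      next
        case False
        have "\<forall>Y\<in>carrier G. psi (g \<otimes> x) Y = Y"
          using c nK[OF g gK] nK[OF x False] tau_tau[OF d] tau_c[OF d] by simp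
        then have "g \<otimes> x \<in> K" using g x by (simp add: K_def)
        then show ?thesis using gK False by simp
      qed
    qed
  qed
  have oneK: "\<one> \<in> K" using psi_one by (simp add: K_def)
  define S where "S g \<longleftrightarrow> (g \<in> K \<longleftrightarrow> F g \<in> A)" for g
  have psiA: "\<And>g Y. g \<in> carrier G \<Longrightarrow> Y \<in> carrier G \<Longrightarrow> psi g Y \<in> A \<longleftrightarrow> Y \<in> A"
  proof -
    fix g Y assume g: "g \<in> carrier G" and Y: "Y \<in> carrier G"
    from alt[OF g] show "psi g Y \<in> A \<longleftrightarrow> Y \<in> A"
    proof
      assume "\<forall>Y\<in>carrier G. psi g Y = Y" then show ?thesis using Y by simp
    next
      assume "\<forall>Y\<in>carrier G. psi g Y = tau A Y" then show ?thesis using Y tau_A[OF d] by simp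
    qed
  qed
  have Smul: "\<And>g x. g \<in> carrier G \<Longrightarrow> x \<in> carrier G \<Longrightarrow> S (g \<otimes> x) \<longleftrightarrow> (S g \<longleftrightarrow> S x)"
  proof -
    fix g x assume g: "g \<in> carrier G" and x: "x \<in> carrier G"
    have "F (g \<otimes> x) \<in> A \<longleftrightarrow> (F g \<in> A \<longleftrightarrow> F x \<in> A)"
      using Fmul[OF g x] index2[OF d] psiA[OF g] g x by simp
    then show "S (g \<otimes> x) \<longleftrightarrow> (S g \<longleftrightarrow> S x)" using Kx[OF g x] unfolding S_def
      by (cases "g \<in> K"; cases "x \<in> K"; cases "F g \<in> A"; cases "F x \<in> A"; simp)
  qed
  have i: "\<And>g. g \<in> carrier G \<Longrightarrow> g \<notin> K \<Longrightarrow> F g \<notin> A \<Longrightarrow> g \<in> A"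
  proof -
    fix g assume g: "g \<in> carrier G" and gK: "g \<notin> K" and gA: "F g \<notin> A"
    have "F (g \<otimes> g) = F g \<otimes> tau A (F g)" using Fmul[OF g g] nK[OF g gK] g by simp
    also have "\<dots> = \<one>" using gA g by (simp add: tau_def)
    finally have "g \<otimes> g = \<one>" using Finj[of "g \<otimes> g" \<one>] F1 g by simp
    then show "g \<in> A" using f(8)[OF g] f(11) by auto
  qed
  have ii: "\<exists>p\<in>carrier G. p \<notin> K \<and> F p \<notin> A"
  proof (rule ccontr)
    assume n: "\<not> (\<exists>p\<in>carrier G. p \<notin> K \<and> F p \<notin> A)"
    then have Fg0: "F g0 \<in> A" using g0 g0K by blast
    define x where "x = Fi y1"
    have xc: "x \<in> carrier G" and Fx: "F x = y1" using y1 by (auto simp: x_def)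
    have xK: "x \<in> K" using n xc Fx y1 by blast
    have g0x: "g0 \<otimes> x \<notin> K" using Kx[OF g0 xc] g0K xK by simp
    have "F (g0 \<otimes> x) = F g0 \<otimes> tau A y1" using Fmul[OF g0 xc] nK[OF g0 g0K] Fx y1 by simp
    moreover have "tau A y1 \<notin> A" using tau_A[OF d y1(1)] y1 by simp
    ultimately have "F (g0 \<otimes> x) \<notin> A" using index2[OF d Fc[OF g0] tau_c[OF d y1(1)]] Fg0 by simp
    then show False using n g0x g0 xc by blast
  qed
  then obtain p where p: "p \<in> carrier G" "p \<notin> K" "F p \<notin> A" by blast
  have pA: "p \<in> A" using i p by blast
  have Sp: "S p" using p by (simp add: S_def)
  have iii: "\<And>g. g \<in> carrier G \<Longrightarrow> S g \<Longrightarrow> g \<in> A"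
  proof -
    fix g assume g: "g \<in> carrier G" and Sg: "S g"
    show "g \<in> A"
    proof (cases "g \<in> K")
      case False
      then have "F g \<notin> A" using Sg by (simp add: S_def)
      then show ?thesis using i g False by blast
    next
      case True
      have "S (p \<otimes> g)" using Smul[OF p(1) g] Sp Sg by simp
      moreover have "p \<otimes> g \<notin> K" using Kx[OF p(1) g] p True by simp
      ultimately have "F (p \<otimes> g) \<notin> A" by (simp add: S_def)
      then have "p \<otimes> g \<in> A" using i p g \<open>p \<otimes> g \<notin> K\<close> by blast
      then have "inv p \<otimes> (p \<otimes> g) \<in> A" using sg_mul[OF sg sg_inv[OF sg pA]] by blast
      then show ?thesis using p g by simp
    qed
  qed
  have iv: "\<And>g. g \<in> A \<Longrightarrow> S g"
  proof (rule ccontr)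
    fix g assume gA: "g \<in> A" and nS: "\<not> S g"
    have gc: "g \<in> carrier G" using gA Ac by auto
    have "\<not> S y1" using iii y1 by blast
    then have "S (g \<otimes> y1)" using Smul[OF gc y1(1)] nS by simp
    then have "g \<otimes> y1 \<in> A" using iii gc y1 by simp
    then show False using dic_notA_mult(1)[OF d gA y1] by simp
  qed
  have vi: "\<exists>k\<in>K. F k \<notin> A"
  proof (rule ccontr)
    assume n: "\<not> (\<exists>k\<in>K. F k \<notin> A)"
    have all: "\<forall>g\<in>carrier G. g \<notin> K \<longrightarrow> F g \<notin> A"
    proof (intro ballI impI)
      fix g assume g: "g \<in> carrier G" and gK: "g \<notin> K"
      show "F g \<notin> A"
      proof
        assume FgA: "F g \<in> A"
        have "\<forall>x\<in>carrier G. F x \<in> A"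
        proof
          fix x assume x: "x \<in> carrier G"
          show "F x \<in> A"
          proof (cases "x \<in> K")
            case True then show ?thesis using n by blast
          next
            case False
            define k where "k = inv g \<otimes> x"
            have kc: "k \<in> carrier G" using g x by (simp add: k_def)
            have igK: "inv g \<notin> K" using Kx[OF g inv_closed[OF g]] oneK gK g by simp
            have kK: "k \<in> K" using Kx[OF inv_closed[OF g] x] igK False by (simp add: k_def)
            have xe: "x = g \<otimes> k" using g x by (simp add: k_def)
            have "F x = F g \<otimes> tau A (F k)" using xe Fmul[OF g kc] nK[OF g gK] kc by simp
            moreover have "F k \<in> A" using n kK by blast
            ultimately show ?thesis using FgA tau_A[OF d] index2[OF d] Ac kc g
              by (simp add: tau_c[OF d])
          qed
        qed
        then have "F (Fi y1) \<in> A" using Fi_c[OF y1(1)] by blast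
        then have "y1 \<in> A" using F_Fi[OF y1(1)] by simp
        then show False using y1 by simp
      qed
    qed
    have "\<forall>g\<in>carrier G. S g"
    proof
      fix g assume g: "g \<in> carrier G"
      show "S g"
      proof (cases "g \<in> K")
        case True then show ?thesis using n by (auto simp: S_def)
      next
        case False then show ?thesis using all g by (simp add: S_def)
      qed
    qed
    then have "y1 \<in> A" using iii y1 by blast
    then show False using y1 by simp
  qed
  then obtain k where kK: "k \<in> K" and Fk: "F k \<notin> A" by blast
  have kc: "k \<in> carrier G" using kK by (simp add: K_def)
  have "\<not> S k" using kK Fk by (simp add: S_def)
  then have kA: "k \<notin> A" using iv by blast
  have Fz: "F z = z"
  proof -
    have "F (k \<otimes> k) = F k \<otimes> F k" using Fmul[OF kc kc] yK[OF kK] kc by simp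
    then show ?thesis using f(8)[OF kc kA] f(8)[OF Fc[OF kc] Fk] by simp
  qed
  have viii: "\<forall>E\<in>A. E \<otimes> E = \<one> \<or> E \<otimes> E = z"
  proof
    fix E assume EA: "E \<in> A"
    have Ec: "E \<in> carrier G" using EA Ac by auto
    define g where "g = Fi E"
    have gc: "g \<in> carrier G" and Fg: "F g = E" using Ec by (auto simp: g_def)
    show "E \<otimes> E = \<one> \<or> E \<otimes> E = z"
    proof (cases "g \<in> K")
      case True
      have "S g" using True Fg EA by (simp add: S_def)
      then have gA: "g \<in> A" using iii gc by blast
      have pc: "p \<in> carrier G" using p by simp
      have "p \<otimes> g = g \<otimes> p" using f(6)[OF pA gA] .
      moreover have "F (p \<otimes> g) = F p \<otimes> E" using Fmul[OF pc gc] nK[OF pc p(2)] Fg Ec EA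
        by (simp add: tau_def)
      moreover have "F (g \<otimes> p) = E \<otimes> F p" using Fmul[OF gc pc] yK[OF True] Fg pc by simp
      ultimately have e: "F p \<otimes> E = E \<otimes> F p" by simp
      have "F p \<otimes> E = inv E \<otimes> F p" using f(9)[OF Fc[OF pc] p(3) EA] .
      then have "inv E = E" using e Ec pc by simp
      then show ?thesis using inv_self_sq Ec by simp
    next
      case False
      have "\<not> S g" using False Fg EA by (simp add: S_def)
      then have gA: "g \<notin> A" using iv by blast
      have "F (g \<otimes> g) = E \<otimes> E" using Fmul[OF gc gc] nK[OF gc False] Fg Ec EA by (simp add: tau_def)
      then show ?thesis using f(8)[OF gc gA] Fz by simp
    qed
  qed
  have "pq" using dic_pq[OF d viii] .
  then show False using npq by simp
qed

theorem abelian_id: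
  assumes ab: "\<forall>a\<in>carrier G. \<forall>b\<in>carrier G. a \<otimes> b = b \<otimes> a"
  shows "\<forall>g\<in>carrier G. \<forall>Y\<in>carrier G. psi g Y = Y"
proof (rule ccontr)
  assume "\<not> (\<forall>g\<in>carrier G. \<forall>Y\<in>carrier G. psi g Y = Y)"
  then obtain g Y0 where g: "g \<in> carrier G" and Y0: "Y0 \<in> carrier G" and ne: "psi g Y0 \<noteq> Y0" by blast
  have pg: "\<forall>Y\<in>carrier G. psi g Y = inv Y" using abelian_cp[OF ab psi_cpg[OF g]] Y0 ne by blast
  have x0: "inv Y0 \<noteq> Y0" using pg Y0 ne by simp
  define x0 where "x0 = Y0"
  have x0c: "x0 \<in> carrier G" using Y0 by (simp add: x0_def)
  have ix0: "inv x0 \<noteq> x0" using x0 by (simp add: x0_def)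
  have px0: "\<forall>Y\<in>carrier G. psi x0 Y = Y"
  proof -
    have "(\<forall>Y\<in>carrier G. psi x0 Y = Y) \<or> (\<forall>Y\<in>carrier G. psi x0 Y = inv Y)"
      using abelian_cp[OF ab psi_cpg[OF x0c]] .
    moreover have "\<not> (\<forall>Y\<in>carrier G. psi x0 Y = inv Y)"
    proof
      assume a: "\<forall>Y\<in>carrier G. psi x0 Y = inv Y"
      have "F (x0 \<otimes> inv x0) = F x0 \<otimes> inv (F (inv x0))" using Fmul[OF x0c inv_closed[OF x0c]] a x0c by simp
      then have "\<one> = F x0 \<otimes> inv (F (inv x0))" using F1 x0c by simp
      then have "F x0 \<otimes> inv (F (inv x0)) = \<one>" by simp
      then have "F (inv x0) = F x0" using inv_solve_right'[of \<one> "F x0" "F (inv x0)"] x0c by simp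
      then show False using Finj[of "inv x0" x0] x0c ix0 by simp
    qed
    ultimately show ?thesis by blast
  qed
  have "F (x0 \<otimes> g) = F x0 \<otimes> F g" using Fmul[OF x0c g] px0 g by simp
  moreover have "F (g \<otimes> x0) = F g \<otimes> inv (F x0)" using Fmul[OF g x0c] pg x0c by simp
  moreover have "x0 \<otimes> g = g \<otimes> x0" using ab x0c g by blast
  moreover have "F x0 \<otimes> F g = F g \<otimes> F x0" using ab x0c g by simp
  ultimately have "F g \<otimes> F x0 = F g \<otimes> inv (F x0)" by simp
  then have e: "inv (F x0) = F x0" using g x0c by simp
  have "F (x0 \<otimes> inv x0) = F x0 \<otimes> F (inv x0)" using Fmul[OF x0c inv_closed[OF x0c]] px0 x0c by simp
  then have "\<one> = F x0 \<otimes> F (inv x0)" using F1 x0c by simp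
  then have "F x0 \<otimes> F (inv x0) = \<one>" by simp
  then have "F (inv x0) \<otimes> F x0 = \<one>" using inv_comm x0c by simp
  then have "F (inv x0) = inv (F x0)" using inv_equality[of "F (inv x0)" "F x0"] x0c by simp
  then have "F (inv x0) = F x0" using e by simp
  then show False using Finj[of "inv x0" x0] x0c ix0 by simp
qed

theorem main:
  shows "F \<in> hom G G \<or> (pq \<and> \<not> (\<forall>a\<in>carrier G. \<forall>b\<in>carrier G. a \<otimes> b = b \<otimes> a))"
proof -
  have "(\<forall>g\<in>carrier G. \<forall>Y\<in>carrier G. psi g Y = Y) \<or> (pq \<and> \<not> (\<forall>a\<in>carrier G. \<forall>b\<in>carrier G. a \<otimes> b = b \<otimes> a))"
    using npq_id abelian_id by blast
  moreover have "(\<forall>g\<in>carrier G. \<forall>Y\<in>carrier G. psi g Y = Y) \<Longrightarrow> F \<in> hom G G"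
    by (rule homI) (simp_all add: Fmul)
  ultimately show ?thesis by blast
qed

end


lemma (in group) main_cor:
  assumes "\<not> hamiltonian_2group G"
  shows "strongly_CCA G (carrier G - {\<one>})"
proof -
  let ?S = "carrier G - {\<one>}"
  show ?thesis
    unfolding strongly_CCA_def
  proof (intro allI impI, elim conjE)
    fix \<phi> assume aut: "cay_graph_aut G ?S \<phi>" and cp: "colour_permuting G ?S \<phi>"
    have bphi: "bij_betw \<phi> (carrier G) (carrier G)" using aut by (simp add: cay_graph_aut_def)
    have phic: "\<And>x. x \<in> carrier G \<Longrightarrow> \<phi> x \<in> carrier G" using bphi bij_betwE by blast
    define c where "c = \<phi> \<one>"
    have cc: "c \<in> carrier G" using phic by (simp add: c_def)
    define F where "F x = inv c \<otimes> \<phi> x" for x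
    have Fc: "\<And>x. x \<in> carrier G \<Longrightarrow> F x \<in> carrier G" using phic cc by (simp add: F_def)
    have bF: "bij_betw F (carrier G) (carrier G)"
      unfolding bij_betw_def
    proof
      show "inj_on F (carrier G)"
      proof (rule inj_onI)
        fix x y assume x: "x \<in> carrier G" and y: "y \<in> carrier G" and e: "F x = F y"
        then have "\<phi> x = \<phi> y" using phic cc by (simp add: F_def)
        then show "x = y" using bphi x y by (metis bij_betw_def inj_onD)
      qed
      show "F ` carrier G = carrier G"
      proof
        show "F ` carrier G \<subseteq> carrier G" using Fc by blast
        show "carrier G \<subseteq> F ` carrier G"
        proof
          fix y assume y: "y \<in> carrier G"
          have "c \<otimes> y \<in> \<phi> ` carrier G" using bphi cc y by (simp add: bij_betw_def)
          then obtain x where x: "x \<in> carrier G" "\<phi> x = c \<otimes> y" by auto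
          then have "F x = y" using cc y by (simp add: F_def)
          then show "y \<in> F ` carrier G" using x by blast
        qed
      qed
    qed
    have F1: "F \<one> = \<one>" using cc by (simp add: F_def c_def)
    have col: "\<And>a b. a \<in> carrier G \<Longrightarrow> b \<in> carrier G \<Longrightarrow>
        cay_colour G (\<phi> a) (\<phi> b) = {inv (F a) \<otimes> F b, inv (inv (F a) \<otimes> F b)}"
    proof -
      fix a b assume a: "a \<in> carrier G" and b: "b \<in> carrier G"
      have "inv (F a) \<otimes> F b = inv (\<phi> a) \<otimes> \<phi> b"
        using a b cc phic by (simp add: F_def inv_mult_group m_assoc)
      then show "cay_colour G (\<phi> a) (\<phi> b) = {inv (F a) \<otimes> F b, inv (inv (F a) \<otimes> F b)}"
        by (simp add: cay_colour_def)
    qed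
    have FC: "\<And>g s. g \<in> carrier G \<Longrightarrow> s \<in> carrier G \<Longrightarrow>
        inv (F g) \<otimes> F (g \<otimes> s) = F s \<or> inv (F g) \<otimes> F (g \<otimes> s) = inv (F s)"
    proof -
      fix g s assume g: "g \<in> carrier G" and s: "s \<in> carrier G"
      show "inv (F g) \<otimes> F (g \<otimes> s) = F s \<or> inv (F g) \<otimes> F (g \<otimes> s) = inv (F s)"
      proof (cases "s = \<one>")
        case True then show ?thesis using g Fc F1 by simp
      next
        case False
        have adj1: "cay_adj G ?S \<one> s" using s False by (auto simp: cay_adj_def)
        have adj2: "cay_adj G ?S g (g \<otimes> s)" using g s False by (auto simp: cay_adj_def)
        have "cay_colour G \<one> s = cay_colour G g (g \<otimes> s)"
          using g s by (simp add: cay_colour_def m_assoc[symmetric])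
        then have "cay_colour G (\<phi> \<one>) (\<phi> s) = cay_colour G (\<phi> g) (\<phi> (g \<otimes> s))"
          using cp adj1 adj2 unfolding colour_permuting_def by blast
        then have "{inv (F \<one>) \<otimes> F s, inv (inv (F \<one>) \<otimes> F s)} =
            {inv (F g) \<otimes> F (g \<otimes> s), inv (inv (F g) \<otimes> F (g \<otimes> s))}"
          using col g s by simp
        then have "{F s, inv (F s)} = {inv (F g) \<otimes> F (g \<otimes> s), inv (inv (F g) \<otimes> F (g \<otimes> s))}"
          using F1 Fc s by simp
        then show ?thesis by (metis insertCI insertE singletonD)
      qed
    qed
    interpret fm: fmap G F using bF F1 FC by unfold_locales auto
    have "F \<in> hom G G"
      using fm.main pq_hamiltonian assms by blast
    then have iso: "F \<in> iso G G" using bF by (simp add: iso_def)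
    define g where "g = inv_into (carrier G) F c"
    have gc: "g \<in> carrier G" unfolding g_def using bF cc by (meson bij_betwE bij_betw_inv_into)
    have Fg: "F g = c" unfolding g_def using bF cc by (simp add: bij_betw_inv_into_right)
    have "\<forall>x\<in>carrier G. \<phi> x = F (g \<otimes> x)"
    proof
      fix x assume x: "x \<in> carrier G"
      have "F (g \<otimes> x) = F g \<otimes> F x" using \<open>F \<in> hom G G\<close> gc x by (simp add: hom_mult)
      also have "\<dots> = \<phi> x" using Fg cc x phic by (simp add: F_def)
      finally show "\<phi> x = F (g \<otimes> x)" by simp
    qed
    then show "affine_map G \<phi>" unfolding affine_map_def using iso gc by blast
  qed
qed

theorem corollary4p8:
  fixes G :: "('a, 'c) monoid_scheme"
  assumes "group G"
    and "\<not> hamiltonian_2group G"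
  shows "strongly_CCA G (carrier G - {\<one>\<^bsub>G\<^esub>})"
  using group.main_cor[OF assms(1) assms(2)] .


end
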